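(* Let $\Pi$ be an LCL problem with constant mending radius, i.e., $\Pi$ is $T$-mendable for some constant function $T$. Then $\Pi$ can be solved in $O(\log^* n)$ rounds in the LOCAL model.
   Context: A locally verifiable problem $\Pi$ on a graph family $\mathcal{G}$ is given by a set $\Sigma$ of input labels, a set $\Gamma$ of output labels and a verifier $\psi$ with verification radius $r$: $\psi(G,\lambda,v)\in\{\text{happy},\text{unhappy}\}$ depends only on the radius-$r$ neighborhood of $v$ (structure, inputs and outputs, up to isomorphism); $\lambda:V\to\Gamma$ is a solution if $\psi$ is happy everywhere. $\Pi$ is an LCL problem if $\Sigma,\Gamma$ are finite and all graphs in $\mathcal{G}$ have maximum degree bounded by a constant. Partial labelings are maps $\lambda:V\to\Gamma\cup\{\bot\}$; the relaxed verifier $\psi^*$ is happy at $v$ if some node within distance $r$ of $v$ has label $\bot$, and otherwise $\psi^*(G,\lambda,v)=\psi(G,\lambda',v)$ for any $\lambda':V\to\Gamma$ agreeing with $\lambda$ on the radius-$r$ neighborhood of $v$; $\psi^*$ accepts $\lambda$ if happy everywhere. Given $\lambda$ accepted by $\psi^*$ and node $v$, a $t$-mend of $\lambda$ at $v$ is a partial labeling $\mu$ accepted by $\psi^*$ with $\mu(v)\neq\bot$, $\mu(u)=\bot\Rightarrow\lambda(u)=\bot$, and $\mu(u)\neq\lambda(u)\Rightarrow\mathrm{dist}(u,v)\le t$. A verifier is $T$-mendable if for every $G\in\mathcal{G}$ with $n$ nodes, every $\lambda$ accepted by $\psi^*$ and every node $v$, a $T(n)$-mend at $v$ exists; $\Pi$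 is $T$-mendable if some radius-$r$ verifier for $\Pi$ (accepting exactly the solutions of $\Pi$) is $T$-mendable. LOCAL model: nodes with unique identifiers communicate along edges in synchronous rounds with unbounded messages; the running time is the number of rounds until all nodes output labels forming a valid solution. *)

theory Defs
  imports Complex_Main
begin

type_synonym ('v,'i) igraph = "'v set \<times> ('v \<Rightarrow> 'v \<Rightarrow> bool) \<times> ('v \<Rightarrow> 'i)"

definition verts :: "('v,'i) igraph \<Rightarrow> 'v set" where "verts G = fst G"
definition adj :: "('v,'i) igraph \<Rightarrow> 'v \<Rightarrow> 'v \<Rightarrow> bool" where "adj G = fst (snd G)"
definition inp :: "('v,'i) igraph \<Rightarrow> 'v \<Rightarrow> 'i" where "inp G = snd (snd G)"

definition wf_graph :: "('v,'i) igraph \<Rightarrow> bool" where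
  "wf_graph G \<longleftrightarrow> finite (verts G) \<and>
     (\<forall>a b. adj G a b \<longrightarrow> a \<in> verts G \<and> b \<in> verts G \<and> a \<noteq> b \<and> adj G b a)"

definition max_degree_le :: "('v,'i) igraph \<Rightarrow> nat \<Rightarrow> bool" where
  "max_degree_le G \<Delta> \<longleftrightarrow> (\<forall>v\<in>verts G. card {u \<in> verts G. adj G v u} \<le> \<Delta>)"

definition dist_le :: "('v,'i) igraph \<Rightarrow> nat \<Rightarrow> 'v \<Rightarrow> 'v \<Rightarrow> bool" where
  "dist_le G k u w \<longleftrightarrow> (\<exists>j\<le>k. (u, w) \<in> {(a, b). adj G a b} ^^ j)"

definition ball :: "('v,'i) igraph \<Rightarrow> 'v \<Rightarrow> nat \<Rightarrow> 'v set" where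
  "ball G v k = {u \<in> verts G. dist_le G k v u}"

definition labeling_in :: "('v,'i) igraph \<Rightarrow> 'o set \<Rightarrow> ('v \<Rightarrow> 'o) \<Rightarrow> bool" where
  "labeling_in G \<Gamma> l \<longleftrightarrow> (\<forall>v\<in>verts G. l v \<in> \<Gamma>)"

definition ball_iso :: "('v,'i) igraph \<Rightarrow> ('v \<Rightarrow> 'o) \<Rightarrow> 'v \<Rightarrow> ('v,'i) igraph \<Rightarrow> ('v \<Rightarrow> 'o) \<Rightarrow> 'v
    \<Rightarrow> nat \<Rightarrow> ('v \<Rightarrow> 'v) \<Rightarrow> bool" where
  "ball_iso G l v G' l' v' r f \<longleftrightarrow>
     bij_betw f (ball G v r) (ball G' v' r) \<and> f v = v' \<and>
     (\<forall>a\<in>ball G v r. \<forall>b\<in>ball G v r. adj G' (f a) (f b) \<longleftrightarrow> adj G a b) \<and>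
     (\<forall>a\<in>ball G v r. inp G' (f a) = inp G a \<and> l' (f a) = l a)"

text \<open>A verifier (True = happy) of verification radius r on the family \<G>.\<close>
definition local_verifier :: "('v,'i) igraph set \<Rightarrow> 'o set
    \<Rightarrow> (('v,'i) igraph \<Rightarrow> ('v \<Rightarrow> 'o) \<Rightarrow> 'v \<Rightarrow> bool) \<Rightarrow> nat \<Rightarrow> bool" where
  "local_verifier \<G> \<Gamma> \<psi> r \<longleftrightarrow>
     (\<forall>G\<in>\<G>. \<forall>G'\<in>\<G>. \<forall>l l' v v' f.
        labeling_in G \<Gamma> l \<and> labeling_in G' \<Gamma> l' \<and> v \<in> verts G \<and> v' \<in> verts G' \<and>
        ball_iso G l v G' l' v' r f \<longrightarrow> \<psi> G l v = \<psi> G' l' v')"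

definition LCL :: "('v,'i) igraph set \<Rightarrow> 'i set \<Rightarrow> 'o set
    \<Rightarrow> (('v,'i) igraph \<Rightarrow> ('v \<Rightarrow> 'o) \<Rightarrow> 'v \<Rightarrow> bool) \<Rightarrow> nat \<Rightarrow> bool" where
  "LCL \<G> \<Sigma> \<Gamma> \<psi> r \<longleftrightarrow> finite \<Sigma> \<and> finite \<Gamma> \<and>
     (\<forall>G\<in>\<G>. wf_graph G \<and> (\<forall>v\<in>verts G. inp G v \<in> \<Sigma>)) \<and>
     (\<exists>\<Delta>. \<forall>G\<in>\<G>. max_degree_le G \<Delta>) \<and>
     local_verifier \<G> \<Gamma> \<psi> r"

definition is_solution :: "'o set \<Rightarrow> (('v,'i) igraph \<Rightarrow> ('v \<Rightarrow> 'o) \<Rightarrow> 'v \<Rightarrow> bool)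
    \<Rightarrow> ('v,'i) igraph \<Rightarrow> ('v \<Rightarrow> 'o) \<Rightarrow> bool" where
  "is_solution \<Gamma> \<psi> G l \<longleftrightarrow> labeling_in G \<Gamma> l \<and> (\<forall>v\<in>verts G. \<psi> G l v)"

definition partial_labeling :: "('v,'i) igraph \<Rightarrow> 'o set \<Rightarrow> ('v \<Rightarrow> 'o option) \<Rightarrow> bool" where
  "partial_labeling G \<Gamma> \<mu> \<longleftrightarrow> (\<forall>v\<in>verts G. \<forall>x. \<mu> v = Some x \<longrightarrow> x \<in> \<Gamma>)"

definition psi_star :: "'o set \<Rightarrow> (('v,'i) igraph \<Rightarrow> ('v \<Rightarrow> 'o) \<Rightarrow> 'v \<Rightarrow> bool) \<Rightarrow> nat
    \<Rightarrow> ('v,'i) igraph \<Rightarrow> ('v \<Rightarrow> 'o option) \<Rightarrow> 'v \<Rightarrow> bool" where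
  "psi_star \<Gamma> \<psi> r G \<mu> v \<longleftrightarrow>
     (\<exists>u\<in>ball G v r. \<mu> u = None) \<or>
     (\<forall>l. labeling_in G \<Gamma> l \<and> (\<forall>u\<in>ball G v r. \<mu> u = Some (l u)) \<longrightarrow> \<psi> G l v)"

definition accepts_star :: "'o set \<Rightarrow> (('v,'i) igraph \<Rightarrow> ('v \<Rightarrow> 'o) \<Rightarrow> 'v \<Rightarrow> bool) \<Rightarrow> nat
    \<Rightarrow> ('v,'i) igraph \<Rightarrow> ('v \<Rightarrow> 'o option) \<Rightarrow> bool" where
  "accepts_star \<Gamma> \<psi> r G \<mu> \<longleftrightarrow>
     partial_labeling G \<Gamma> \<mu> \<and> (\<forall>v\<in>verts G. psi_star \<Gamma> \<psi> r G \<mu> v)"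

definition is_mend :: "'o set \<Rightarrow> (('v,'i) igraph \<Rightarrow> ('v \<Rightarrow> 'o) \<Rightarrow> 'v \<Rightarrow> bool) \<Rightarrow> nat
    \<Rightarrow> ('v,'i) igraph \<Rightarrow> ('v \<Rightarrow> 'o option) \<Rightarrow> 'v \<Rightarrow> nat \<Rightarrow> ('v \<Rightarrow> 'o option) \<Rightarrow> bool" where
  "is_mend \<Gamma> \<psi> r G lam v t \<mu> \<longleftrightarrow>
     accepts_star \<Gamma> \<psi> r G \<mu> \<and> \<mu> v \<noteq> None \<and>
     (\<forall>u\<in>verts G. \<mu> u = None \<longrightarrow> lam u = None) \<and>
     (\<forall>u\<in>verts G. \<mu> u \<noteq> lam u \<longrightarrow> dist_le G t v u)"

definition mendable :: "('v,'i) igraph set \<Rightarrow> 'o set \<Rightarrow> (('v,'i) igraph \<Rightarrow> ('v \<Rightarrow> 'o) \<Rightarrow> 'v \<Rightarrow> bool)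
    \<Rightarrow> nat \<Rightarrow> (nat \<Rightarrow> nat) \<Rightarrow> bool" where
  "mendable \<G> \<Gamma> \<psi> r T \<longleftrightarrow>
     (\<forall>G\<in>\<G>. \<forall>lam. accepts_star \<Gamma> \<psi> r G lam \<longrightarrow>
        (\<forall>v\<in>verts G. \<exists>\<mu>. is_mend \<Gamma> \<psi> r G lam v (T (card (verts G))) \<mu>))"

definition log_star :: "nat \<Rightarrow> nat" where
  "log_star n = (LEAST k. ((\<lambda>x. log 2 x) ^^ k) (real n) \<le> 1)"

text \<open>What a node v knows after gathering its radius-k neighbourhood, named by identifiers:
  n, its own id, ids in the ball, induced edges (as id pairs), inputs (id, input).\<close>
type_synonym 'i view = "nat \<times> nat \<times> nat set \<times> (nat \<times> nat) set \<times> (nat \<times> 'i) set"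

definition local_view :: "('v,'i) igraph \<Rightarrow> ('v \<Rightarrow> nat) \<Rightarrow> nat \<Rightarrow> 'v \<Rightarrow> 'i view" where
  "local_view G idf k v =
     (let B = ball G v k in
       (card (verts G), idf v, idf ` B,
        {(idf a, idf b) | a b. a \<in> B \<and> b \<in> B \<and> adj G a b},
        {(idf a, inp G a) | a. a \<in> B}))"

definition valid_ids :: "('v,'i) igraph \<Rightarrow> nat \<Rightarrow> ('v \<Rightarrow> nat) \<Rightarrow> bool" where
  "valid_ids G c idf \<longleftrightarrow> inj_on idf (verts G) \<and>
     (\<forall>v\<in>verts G. 1 \<le> idf v \<and> idf v \<le> card (verts G) ^ c)"

definition LOCAL_solves :: "('v,'i) igraph set \<Rightarrow> 'o set \<Rightarrow> (('v,'i) igraph \<Rightarrow> ('v \<Rightarrow> 'o) \<Rightarrow> 'v \<Rightarrow> bool)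
    \<Rightarrow> ('i view \<Rightarrow> 'o) \<Rightarrow> (nat \<Rightarrow> nat) \<Rightarrow> nat \<Rightarrow> bool" where
  "LOCAL_solves \<G> \<Gamma> \<psi> A t c \<longleftrightarrow>
     (\<forall>G\<in>\<G>. \<forall>idf. valid_ids G c idf \<longrightarrow>
        is_solution \<Gamma> \<psi> G (\<lambda>v. A (local_view G idf (t (card (verts G))) v)))"

definition solvable_in_O_log_star :: "('v,'i) igraph set \<Rightarrow> 'o set
    \<Rightarrow> (('v,'i) igraph \<Rightarrow> ('v \<Rightarrow> 'o) \<Rightarrow> 'v \<Rightarrow> bool) \<Rightarrow> bool" where
  "solvable_in_O_log_star \<G> \<Gamma> \<psi> \<longleftrightarrow>
     (\<forall>c::nat. \<exists>(A :: 'i view \<Rightarrow> 'o) (t :: nat \<Rightarrow> nat) (C :: nat).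
        (\<forall>n. t n \<le> C * (log_star n + 1)) \<and> LOCAL_solves \<G> \<Gamma> \<psi> A t c)"

end

theory Submission
  imports Defs
begin

abbreviation E :: "('v,'i) igraph \<Rightarrow> ('v \<times> 'v) set" where
  "E G \<equiv> {(a, b). adj G a b}"

lemma adj_sym: "wf_graph G \<Longrightarrow> adj G a b \<Longrightarrow> adj G b a"
  unfolding wf_graph_def by blast

lemma adj_verts: "wf_graph G \<Longrightarrow> adj G a b \<Longrightarrow> a \<in> verts G \<and> b \<in> verts G"
  unfolding wf_graph_def by blast

lemma adj_neq: "wf_graph G \<Longrightarrow> adj G a b \<Longrightarrow> a \<noteq> b"
  unfolding wf_graph_def by blast

lemma wf_finite: "wf_graph G \<Longrightarrow> finite (verts G)"
  unfolding wf_graph_def by blast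

lemma dist_le_refl[simp]: "dist_le G k u u"
  unfolding dist_le_def by (rule exI[of _ 0]) auto

lemma dist_le_mono: "dist_le G k u w \<Longrightarrow> k \<le> k' \<Longrightarrow> dist_le G k' u w"
  unfolding dist_le_def by (meson order_trans)

lemma dist_le_trans: "dist_le G a u w \<Longrightarrow> dist_le G b w x \<Longrightarrow> dist_le G (a + b) u x"
  unfolding dist_le_def
proof (elim exE conjE)
  fix i j assume "i \<le> a" "(u, w) \<in> E G ^^ i" "j \<le> b" "(w, x) \<in> E G ^^ j"
  then have "(u, x) \<in> E G ^^ (i + j)" by (auto simp: relpow_add)
  then show "\<exists>j\<le>a + b. (u, x) \<in> E G ^^ j" using \<open>i \<le> a\<close> \<open>j \<le> b\<close> by (intro exI[of _ "i+j"]) auto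
qed

lemma relpow_sym:
  assumes "wf_graph G" "(u, w) \<in> E G ^^ j" shows "(w, u) \<in> E G ^^ j"
  using assms(2)
proof (induction j arbitrary: w)
  case 0 then show ?case by simp
next
  case (Suc j)
  from Suc.prems obtain y where y: "(u, y) \<in> E G ^^ j" "(y, w) \<in> E G" by (rule relpow_Suc_E)
  then have yu: "(y, u) \<in> E G ^^ j" using Suc.IH by blast
  have "adj G y w" using y(2) by simp
  then have "adj G w y" by (rule adj_sym[OF assms(1)])
  then have "(w, y) \<in> E G" by simp
  from relpow_Suc_I2[OF this yu] show ?case .
qed

lemma dist_le_sym: "wf_graph G \<Longrightarrow> dist_le G k u w \<Longrightarrow> dist_le G k w u"
  unfolding dist_le_def by (metis relpow_sym)

lemma relpow_verts:
  assumes "wf_graph G" "(u, w) \<in> E G ^^ j" "u \<in> verts G" shows "w \<in> verts G"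
  using assms(2)
proof (induction j arbitrary: w)
  case 0 then show ?case using assms by simp
next
  case (Suc j)
  from Suc.prems obtain y where y: "(u, y) \<in> E G ^^ j" "(y, w) \<in> E G" by (rule relpow_Suc_E)
  have "adj G y w" using y(2) by simp
  from adj_verts[OF assms(1) this] show ?case by simp
qed

lemma dist_le_verts: "wf_graph G \<Longrightarrow> dist_le G k u w \<Longrightarrow> u \<in> verts G \<Longrightarrow> w \<in> verts G"
  unfolding dist_le_def by (metis relpow_verts)

lemma ball_center[simp]: "v \<in> verts G \<Longrightarrow> v \<in> ball G v k"
  unfolding ball_def by simp

lemma ball_sub: "ball G v k \<subseteq> verts G"
  unfolding ball_def by auto

lemma in_ball: "u \<in> ball G v k \<longleftrightarrow> u \<in> verts G \<and> dist_le G k v u"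
  unfolding ball_def by auto

lemma dist_le_Suc_E:
  assumes "dist_le G (Suc m) u y"
  shows "dist_le G m u y \<or> (\<exists>x. dist_le G m u x \<and> adj G x y)"
proof -
  from assms obtain j where j: "j \<le> Suc m" "(u, y) \<in> E G ^^ j" unfolding dist_le_def by auto
  show ?thesis
  proof (cases "j \<le> m")
    case True then show ?thesis using j unfolding dist_le_def by auto
  next
    case False then have "j = Suc m" using j by auto
    with j have "(u, y) \<in> E G ^^ Suc m" by simp
    then obtain x where "(u, x) \<in> E G ^^ m" "(x, y) \<in> E G" by (rule relpow_Suc_E)
    then show ?thesis unfolding dist_le_def by auto
  qed
qed

lemma card_ball:
  assumes "wf_graph G" "max_degree_le G \<Delta>" "v \<in> verts G"
  shows "card (ball G v k) \<le> (\<Delta> + 1) ^ k"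
proof (induction k)
  case 0
  have "ball G v 0 = {v}" using assms(3) unfolding ball_def dist_le_def by auto
  then show ?case by simp
next
  case (Suc m)
  have fin: "finite (verts G)" using wf_finite[OF assms(1)] .
  have "ball G v (Suc m) \<subseteq> ball G v m \<union> (\<Union>x\<in>ball G v m. {y \<in> verts G. adj G x y})"
  proof
    fix y assume "y \<in> ball G v (Suc m)"
    then have y: "y \<in> verts G" "dist_le G (Suc m) v y" unfolding ball_def by auto
    from dist_le_Suc_E[OF y(2)] show "y \<in> ball G v m \<union> (\<Union>x\<in>ball G v m. {y \<in> verts G. adj G x y})"
    proof
      assume "dist_le G m v y" then show ?thesis using y by (auto simp: ball_def)
    next
      assume "\<exists>x. dist_le G m v x \<and> adj G x y"
      then obtain x where "dist_le G m v x" "adj G x y" by auto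
      moreover then have "x \<in> verts G" using adj_verts[OF assms(1)] by auto
      ultimately show ?thesis using y by (auto simp: ball_def)
    qed
  qed
  then have "card (ball G v (Suc m)) \<le> card (ball G v m \<union> (\<Union>x\<in>ball G v m. {y \<in> verts G. adj G x y}))"
    by (intro card_mono) (auto intro: finite_subset[OF _ fin] simp: ball_def)
  also have "\<dots> \<le> card (ball G v m) + card (\<Union>x\<in>ball G v m. {y \<in> verts G. adj G x y})"
    by (rule card_Un_le)
  also have "card (\<Union>x\<in>ball G v m. {y \<in> verts G. adj G x y}) \<le> (\<Sum>x\<in>ball G v m. card {y \<in> verts G. adj G x y})"
    by (rule card_UN_le) (auto intro: finite_subset[OF _ fin] simp: ball_def)
  also have "\<dots> \<le> (\<Sum>x\<in>ball G v m. \<Delta>)"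
    using assms(2) unfolding max_degree_le_def ball_def by (intro sum_mono) auto
  also have "\<dots> = card (ball G v m) * \<Delta>" by simp
  finally have "card (ball G v (Suc m)) \<le> card (ball G v m) * (\<Delta> + 1)" by simp
  also have "\<dots> \<le> (\<Delta> + 1) ^ m * (\<Delta> + 1)" using Suc.IH by (rule mult_right_mono) simp
  finally show ?case by (simp add: mult.commute)
qed


section \<open>Cole-Vishkin arithmetic\<close>

definition fd :: "nat \<Rightarrow> nat \<Rightarrow> nat" where
  "fd x y = (LEAST i. bit x i \<noteq> bit y i)"

definition nc :: "nat \<Rightarrow> nat \<Rightarrow> nat" where
  "nc x i = 2 * i + (if bit x i then 1 else 0)"

lemma fd_bit: "x \<noteq> y \<Longrightarrow> bit x (fd x y) \<noteq> bit y (fd x y)"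
  unfolding fd_def by (rule LeastI_ex) (metis bit_eq_iff)

lemma fd_less:
  assumes "x \<noteq> y" "x < 2 ^ L" "y < 2 ^ L" shows "fd x y < L"
proof (rule ccontr)
  assume "\<not> fd x y < L"
  have "\<forall>i<L. bit x i = bit y i"
  proof (intro allI impI)
    fix i assume "i < L"
    then have "i < (LEAST i. bit x i \<noteq> bit y i)" using \<open>\<not> fd x y < L\<close> unfolding fd_def by simp
    from not_less_Least[OF this] show "bit x i = bit y i" by simp
  qed
  then have "take_bit L x = take_bit L y" by (intro bit_eq_iff[THEN iffD2]) (auto simp: bit_take_bit_iff)
  moreover have "take_bit L x = x" "take_bit L y = y" using assms by (auto simp: take_bit_nat_eq_self_iff)
  ultimately show False using assms(1) by simp
qed

lemma nc_eq: "nc x i = nc y j \<Longrightarrow> i = j \<and> (bit x i \<longleftrightarrow> bit y j)"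
  unfolding nc_def by (auto split: if_splits; presburger)

lemma nc_less: "i < L \<Longrightarrow> nc x i < 2 * L"
  unfolding nc_def by auto

definition nxt :: "nat \<Rightarrow> nat" where
  "nxt L = (LEAST m. 2 * L \<le> 2 ^ m)"

lemma nxt_ge: "2 * L \<le> 2 ^ nxt L"
  unfolding nxt_def
proof (rule LeastI)
  have "L < 2 ^ L" by (rule less_exp)
  then show "2 * L \<le> 2 ^ Suc L" by simp
qed

lemma nxt_pos: "L \<ge> 1 \<Longrightarrow> nxt L \<ge> 1"
  using nxt_ge[of L] by (cases "nxt L") auto

lemma log2_nat_le: "log 2 (real m) \<le> real m"
proof (cases "m = 0")
  case True then show ?thesis by (simp add: log_def)
next
  case False
  have "real m < 2 ^ m" using less_exp[of m] by (metis of_nat_less_iff of_nat_numeral of_nat_power)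
  then have "log 2 (real m) < log 2 (2 ^ m)" using False by (subst log_less_cancel_iff) auto
  then show ?thesis by simp
qed

lemma nxt_le_real:
  assumes "L \<ge> 1" shows "real (nxt L) \<le> 2 + log 2 (real L)"
proof -
  define m where "m = nat \<lceil>log 2 (real L)\<rceil> + 1"
  have lg: "log 2 (real L) \<ge> 0" using assms by simp
  have "real L = 2 powr (log 2 (real L))" using assms by simp
  also have "\<dots> \<le> 2 powr (real (nat \<lceil>log 2 (real L)\<rceil>))" using lg by (intro powr_mono) auto
  also have "\<dots> = 2 ^ nat \<lceil>log 2 (real L)\<rceil>" by (simp add: powr_realpow)
  finally have "real (2 * L) \<le> real (2 ^ m)" unfolding m_def by simp
  then have "2 * L \<le> 2 ^ m" by linarith
  then have "nxt L \<le> m" unfolding nxt_def by (rule Least_le)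
  moreover have "real m \<le> 2 + log 2 (real L)" unfolding m_def using lg by linarith
  ultimately show ?thesis by linarith
qed

lemma pow_ge_8: "A \<ge> 8 \<Longrightarrow> A \<le> (2::nat) ^ (A - 3)"
proof (induction A rule: dec_induct)
  case base then show ?case by simp
next
  case (step n)
  then have "Suc n - 3 = Suc (n - 3)" by simp
  then show ?case using step by simp
qed

lemma log_A: assumes "A \<ge> (8::nat)" shows "log 2 (real A) \<le> real A - 3"
proof -
  have "real A \<le> 2 ^ (A - 3)" using pow_ge_8[OF assms] by (metis of_nat_le_iff of_nat_numeral of_nat_power)
  then have "log 2 (real A) \<le> log 2 (2 ^ (A - 3))" using assms by (subst log_le_cancel_iff) auto
  then show ?thesis using assms by simp
qed

lemma step_ineq:
  assumes "A \<ge> (8::nat)" "l > 1" "x \<ge> 1" "x \<le> real A + l"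
  shows "2 + log 2 x \<le> real A + log 2 l"
proof -
  have lx: "log 2 x \<le> log 2 (real A + l)" using assms by (subst log_le_cancel_iff) auto
  show ?thesis
  proof (cases "l \<ge> real A")
    case True
    have "log 2 (real A + l) \<le> log 2 (2 * l)" using True assms by (subst log_le_cancel_iff) auto
    also have "\<dots> = 1 + log 2 l" using assms by (simp add: log_mult)
    finally show ?thesis using lx assms by linarith
  next
    case False
    have "log 2 (real A + l) \<le> log 2 (2 * real A)" using False assms by (subst log_le_cancel_iff) auto
    also have "\<dots> = 1 + log 2 (real A)" using assms by (simp add: log_mult)
    finally have "log 2 x \<le> real A - 2" using lx log_A[OF assms(1)] by linarith
    moreover have "log 2 l > 0" using assms by simp
    ultimately show ?thesis by linarith
  qed
qed

abbreviation lit :: "nat \<Rightarrow> nat \<Rightarrow> real" where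
  "lit n s \<equiv> ((\<lambda>x. log 2 x) ^^ s) (real n)"

lemma ex_log_iter: "x \<le> real m \<Longrightarrow> \<exists>k. ((\<lambda>x. log 2 x) ^^ k) x \<le> 1"
proof (induction m arbitrary: x)
  case 0 then show ?case by (intro exI[of _ 0]) auto
next
  case (Suc m)
  show ?case
  proof (cases "x \<le> 1")
    case True then show ?thesis by (intro exI[of _ 0]) auto
  next
    case False
    have "log 2 x \<le> log 2 (real (Suc m))" using False Suc.prems by (subst log_le_cancel_iff) auto
    also have "\<dots> \<le> real m"
    proof -
      have "Suc m \<le> 2 ^ m" by (induction m) auto
      then have "real (Suc m) \<le> 2 ^ m" by (metis of_nat_le_iff of_nat_numeral of_nat_power)
      then have "log 2 (real (Suc m)) \<le> log 2 (2 ^ m)" by (subst log_le_cancel_iff) auto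
      then show ?thesis by simp
    qed
    finally obtain k where "((\<lambda>x. log 2 x) ^^ k) (log 2 x) \<le> 1" using Suc.IH by blast
    then have "((\<lambda>x. log 2 x) ^^ Suc k) x \<le> 1" by (simp only: funpow_Suc_right o_apply)
    then show ?thesis by blast
  qed
qed

lemma log_star_le: "lit n (log_star n) \<le> 1"
  unfolding log_star_def by (rule LeastI_ex) (rule ex_log_iter[of _ n], simp)

lemma log_star_gt: "s < log_star n \<Longrightarrow> lit n s > 1"
  unfolding log_star_def using not_less_Least by (metis not_le)


definition L0 :: "nat \<Rightarrow> nat \<Rightarrow> nat" where
  "L0 c n = c * nat \<lceil>log 2 (real n)\<rceil> + 1"

fun Ls :: "nat \<Rightarrow> nat \<Rightarrow> nat \<Rightarrow> nat" where
  "Ls c n 0 = L0 c n"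
| "Ls c n (Suc s) = nxt (Ls c n s)"

lemma Ls_pos: "Ls c n s \<ge> 1"
proof (induction s)
  case 0 then show ?case by (simp add: L0_def)
next
  case (Suc s) then show ?case using nxt_pos[of "Ls c n s"] by simp
qed

lemma L0_bound:
  assumes "n \<ge> 1" shows "n ^ c < 2 ^ L0 c n"
proof -
  define b where "b = nat \<lceil>log 2 (real n)\<rceil>"
  have lg: "log 2 (real n) \<ge> 0" using assms by simp
  have "real n = 2 powr (log 2 (real n))" using assms by simp
  also have "\<dots> \<le> 2 powr (real b)" unfolding b_def using lg by (intro powr_mono) auto
  also have "\<dots> = 2 ^ b" by (simp add: powr_realpow)
  finally have "n \<le> 2 ^ b" by (metis of_nat_le_iff of_nat_numeral of_nat_power)
  then have "n ^ c \<le> (2 ^ b) ^ c" by (rule power_mono) simp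
  also have "\<dots> = 2 ^ (c * b)" by (simp add: power_mult[symmetric] mult.commute)
  also have "\<dots> < 2 ^ (c * b + 1)" by simp
  finally show ?thesis unfolding L0_def b_def .
qed

lemma L1_bound:
  assumes "n \<ge> 2"
  shows "real (Ls c n 1) \<le> real (3 * c + 8) + real n"
proof -
  define b where "b = nat \<lceil>log 2 (real n)\<rceil>"
  have lg1: "log 2 (real n) \<ge> 1" using assms by simp
  have "real b \<le> log 2 (real n) + 1" unfolding b_def using lg1 by linarith
  then have "real (L0 c n) \<le> real c * (log 2 (real n) + 1) + 1" unfolding L0_def b_def[symmetric]
    by (simp add: mult_left_mono)
  also have "\<dots> \<le> real (2 * c + 1) * log 2 (real n)"
  proof -
    have "real c * 1 \<le> real c * log 2 (real n)" using lg1 by (intro mult_left_mono) auto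
    then show ?thesis using lg1 by (simp add: algebra_simps)
  qed
  finally have L0le: "real (L0 c n) \<le> real (2 * c + 1) * log 2 (real n)" .
  have "log 2 (real (L0 c n)) \<le> log 2 (real (2 * c + 1) * log 2 (real n))"
    using L0le Ls_pos[of c n 0] lg1 by (subst log_le_cancel_iff) auto
  also have "\<dots> = log 2 (real (2 * c + 1)) + log 2 (log 2 (real n))"
    using lg1 by (subst log_mult) auto
  also have "log 2 (log 2 (real n)) \<le> log 2 (real n)"
    using lg1 log2_nat_le[of n] assms by (subst log_le_cancel_iff) auto
  also have "log 2 (real (2 * c + 1)) \<le> real (2 * c + 1)" by (rule log2_nat_le)
  also have "log 2 (real n) \<le> real n" by (rule log2_nat_le)
  finally have "log 2 (real (L0 c n)) \<le> real (2 * c + 1) + real n" by simp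
  moreover have "real (Ls c n 1) \<le> 2 + log 2 (real (L0 c n))"
    using nxt_le_real[of "L0 c n"] Ls_pos[of c n 0] by simp
  ultimately show ?thesis by simp
qed

lemma Ls_inv:
  assumes "1 \<le> s" "s \<le> log_star n"
  shows "real (Ls c n s) \<le> real (3 * c + 8) + lit n (s - 1)"
  using assms
proof (induction s)
  case 0 then show ?case by simp
next
  case (Suc s)
  show ?case
  proof (cases "s = 0")
    case True
    then have "lit n 0 > 1" using log_star_gt[of 0 n] Suc.prems by simp
    then have "n \<ge> 2" by simp
    then show ?thesis using L1_bound[of n c] True by simp
  next
    case False
    then have IH: "real (Ls c n s) \<le> real (3 * c + 8) + lit n (s - 1)" using Suc by simp
    have gt: "lit n (s - 1) > 1" using log_star_gt[of "s - 1" n] Suc.prems False by simp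
    have "real (Ls c n (Suc s)) \<le> 2 + log 2 (real (Ls c n s))"
      using nxt_le_real[of "Ls c n s"] Ls_pos[of c n s] by simp
    also have "\<dots> \<le> real (3 * c + 8) + log 2 (lit n (s - 1))"
      using step_ineq[of "3 * c + 8" "lit n (s - 1)" "real (Ls c n s)"] IH gt Ls_pos[of c n s] by simp
    also have "log 2 (lit n (s - 1)) = lit n s"
    proof -
      have "s = Suc (s - 1)" using False by simp
      then have "lit n s = lit n (Suc (s - 1))" by simp
      also have "\<dots> = log 2 (lit n (s - 1))" by (simp only: funpow.simps o_apply)
      finally show ?thesis by simp
    qed
    finally show ?thesis by simp
  qed
qed

lemma Ls_final: "Ls c n (log_star n) \<le> 3 * c + 10"
proof (cases "log_star n = 0")
  case True
  then have "real n \<le> 1" using log_star_le[of n] by simp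
  then have "n = 0 \<or> n = 1" by linarith
  then have "log 2 (real n) \<le> 0" by (auto simp: log_def)
  then have "nat \<lceil>log 2 (real n)\<rceil> = 0" by simp
  then show ?thesis using True by (simp add: L0_def)
next
  case False
  define k where "k = log_star n - 1"
  have k: "log_star n = Suc k" using False unfolding k_def by simp
  have inv: "real (Ls c n (Suc k)) \<le> real (3 * c + 8) + lit n k" using Ls_inv[of "Suc k" n c] k by simp
  have gt: "lit n k > 1" using log_star_gt[of k n] k by simp
  have "lit n (Suc k) \<le> 1" using log_star_le[of n] k by simp
  then have "log 2 (lit n k) \<le> 1" by (simp only: funpow.simps o_apply)
  then have "lit n k \<le> 2" using gt by simp
  then have "real (Ls c n (Suc k)) \<le> real (3 * c + 10)" using inv by simp
  then show ?thesis using k by (metis of_nat_le_iff)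
qed


section \<open>The algorithm\<close>

lemma psi_star_local:
  assumes "\<forall>a\<in>ball G u r. \<mu> a = \<mu>' a"
  shows "psi_star \<Gamma> \<psi> r G \<mu> u = psi_star \<Gamma> \<psi> r G \<mu>' u"
  using assms unfolding psi_star_def by auto

locale setting =
  fixes \<G> :: "('v,'i) igraph set" and \<Gamma> :: "'o set"
    and \<psi> :: "('v,'i) igraph \<Rightarrow> ('v \<Rightarrow> 'o) \<Rightarrow> 'v \<Rightarrow> bool"
    and r :: nat and T :: nat and \<Delta> :: nat and c :: nat
  assumes finGam: "finite \<Gamma>"
    and wfG: "G \<in> \<G> \<Longrightarrow> wf_graph G"
    and degG: "G \<in> \<G> \<Longrightarrow> max_degree_le G \<Delta>"
    and lv: "local_verifier \<G> \<Gamma> \<psi> r"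
    and mend: "mendable \<G> \<Gamma> \<psi> r (\<lambda>_. T)"
begin

definition kk :: nat where "kk = 2 * T + 2 * r + 1"
definition nf :: nat where "nf = (\<Delta> + 1) ^ kk"
definition K0 :: nat where "K0 = 2 ^ (3 * c + 10)"
definition PL :: "nat list list" where "PL = List.n_lists nf [0..<K0]"
definition KK :: nat where "KK = length PL"

definition outs :: "('v,'i) igraph \<Rightarrow> ('v \<Rightarrow> nat) \<Rightarrow> 'v \<Rightarrow> nat list" where
  "outs G idf u = sorted_list_of_set (idf ` {x \<in> ball G u kk. idf u < idf x})"

definition par :: "('v,'i) igraph \<Rightarrow> ('v \<Rightarrow> nat) \<Rightarrow> nat \<Rightarrow> 'v \<Rightarrow> 'v option" where
  "par G idf j u = (if j < length (outs G idf u)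
     then Some (the_inv_into (verts G) idf (outs G idf u ! j)) else None)"

primrec col :: "('v,'i) igraph \<Rightarrow> ('v \<Rightarrow> nat) \<Rightarrow> nat \<Rightarrow> 'v \<Rightarrow> nat \<Rightarrow> nat" where
  "col G idf 0 u j = idf u"
| "col G idf (Suc s) u j = (case par G idf j u of
      None \<Rightarrow> nc (col G idf s u j) 0
    | Some w \<Rightarrow> nc (col G idf s u j) (fd (col G idf s u j) (col G idf s w j)))"

definition SS :: "('v,'i) igraph \<Rightarrow> nat" where "SS G = log_star (card (verts G))"

definition color :: "('v,'i) igraph \<Rightarrow> ('v \<Rightarrow> nat) \<Rightarrow> 'v \<Rightarrow> nat list" where
  "color G idf u = map (\<lambda>j. col G idf (SS G) u j) [0..<nf]"

definition active :: "('v,'i) igraph \<Rightarrow> ('v \<Rightarrow> nat) \<Rightarrow> nat \<Rightarrow> 'v \<Rightarrow> bool" where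
  "active G idf p u \<longleftrightarrow> color G idf u = PL ! p"

definition app :: "('v,'i) igraph \<Rightarrow> ('v \<Rightarrow> nat) \<Rightarrow> ('v \<Rightarrow> 'o option) \<Rightarrow> 'v \<Rightarrow> (nat \<Rightarrow> 'o option) \<Rightarrow> 'v \<Rightarrow> 'o option" where
  "app G idf lam w m = (\<lambda>u. if u \<in> ball G w T then m (idf u) else lam u)"

definition Pset :: "('v,'i) igraph \<Rightarrow> ('v \<Rightarrow> nat) \<Rightarrow> ('v \<Rightarrow> 'o option) \<Rightarrow> 'v \<Rightarrow> (nat \<Rightarrow> 'o option) set" where
  "Pset G idf lam w = {m. (\<forall>i. i \<notin> idf ` ball G w T \<longrightarrow> m i = None) \<and> (\<forall>i x. m i = Some x \<longrightarrow> x \<in> \<Gamma>) \<and>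
      m (idf w) \<noteq> None \<and> (\<forall>u\<in>ball G w T. m (idf u) = None \<longrightarrow> lam u = None) \<and>
      (\<forall>u\<in>ball G w (T + r). psi_star \<Gamma> \<psi> r G (app G idf lam w m) u)}"

definition pick :: "('v,'i) igraph \<Rightarrow> ('v \<Rightarrow> nat) \<Rightarrow> nat \<Rightarrow> 'v \<Rightarrow> 'v option" where
  "pick G idf p u = (if \<exists>w\<in>verts G. active G idf p w \<and> dist_le G T w u
     then Some (SOME w. w \<in> verts G \<and> active G idf p w \<and> dist_le G T w u) else None)"

primrec lab :: "('v,'i) igraph \<Rightarrow> ('v \<Rightarrow> nat) \<Rightarrow> nat \<Rightarrow> 'v \<Rightarrow> 'o option" where
  "lab G idf 0 = (\<lambda>_. None)"
| "lab G idf (Suc p) = (\<lambda>u. case pick G idf p u of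
      None \<Rightarrow> lab G idf p u
    | Some w \<Rightarrow> (SOME m. m \<in> Pset G idf (lab G idf p) w) (idf u))"

definition Out :: "('v,'i) igraph \<Rightarrow> ('v \<Rightarrow> nat) \<Rightarrow> 'v \<Rightarrow> 'o" where
  "Out G idf v = the (lab G idf KK v)"

definition tt :: "nat \<Rightarrow> nat" where "tt n = (KK + log_star n + 1) * kk"

context
  fixes G idf
  assumes GG: "G \<in> \<G>" and vid: "valid_ids G c idf"
begin

lemma wf: "wf_graph G" using wfG[OF GG] .
lemma inj: "inj_on idf (verts G)" using vid unfolding valid_ids_def by auto
lemma fin: "finite (verts G)" using wf_finite[OF wf] .

lemma outs_set: "set (outs G idf u) = idf ` {x \<in> ball G u kk. idf u < idf x}"
proof -
  have "{x \<in> ball G u kk. idf u < idf x} \<subseteq> verts G" using ball_sub[of G u kk] by blast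
  then have "finite {x \<in> ball G u kk. idf u < idf x}" using fin by (rule finite_subset)
  then show ?thesis unfolding outs_def by (intro set_sorted_list_of_set finite_imageI)
qed

lemma par_Some:
  assumes "par G idf j u = Some w"
  shows "w \<in> ball G u kk \<and> idf u < idf w \<and> w \<in> verts G"
proof -
  have j: "j < length (outs G idf u)" and w: "w = the_inv_into (verts G) idf (outs G idf u ! j)"
    using assms unfolding par_def by (auto split: if_splits)
  have "outs G idf u ! j \<in> set (outs G idf u)" using j by simp
  then obtain x where x: "x \<in> ball G u kk" "idf u < idf x" "outs G idf u ! j = idf x"
    unfolding outs_set by auto
  have "x \<in> verts G" using x(1) ball_sub[of G u kk] by blast
  then have "w = x" using w x(3) inj by (simp add: the_inv_into_f_f)
  then show ?thesis using x \<open>x \<in> verts G\<close> by simp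
qed

lemma col_proper:
  assumes "par G idf j u = Some w"
  shows "col G idf s u j \<noteq> col G idf s w j"
proof (cases s)
  case 0
  have "idf u < idf w" using par_Some[OF assms] by simp
  then show ?thesis using 0 by simp
next
  case (Suc s')
  have wv: "w \<in> verts G" and lt: "idf u < idf w" using par_Some[OF assms] by auto
  have ne: "col G idf s' u j \<noteq> col G idf s' w j"
  proof (induction s')
    case 0 then show ?case using lt by simp
  next
    case (Suc s'')
    show ?case
    proof
      assume eq: "col G idf (Suc s'') u j = col G idf (Suc s'') w j"
      define x where "x = col G idf s'' u j"
      define y where "y = col G idf s'' w j"
      have xy: "x \<noteq> y" using Suc.IH unfolding x_def y_def .
      have cu: "col G idf (Suc s'') u j = nc x (fd x y)" using assms unfolding x_def y_def by simp
      obtain i where ci: "col G idf (Suc s'') w j = nc y i"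
        by (cases "par G idf j w") (auto simp: y_def)
      from nc_eq[of x "fd x y" y i] eq cu ci have "fd x y = i" "bit x (fd x y) = bit y i" by auto
      then show False using fd_bit[OF xy] by simp
    qed
  qed
  show ?thesis
  proof
    assume eq: "col G idf s u j = col G idf s w j"
    define x where "x = col G idf s' u j"
    define y where "y = col G idf s' w j"
    have cu: "col G idf s u j = nc x (fd x y)" using assms Suc unfolding x_def y_def by simp
    obtain i where ci: "col G idf s w j = nc y i"
      using Suc by (cases "par G idf j w") (auto simp: y_def)
    from nc_eq[of x "fd x y" y i] eq cu ci have "fd x y = i" "bit x (fd x y) = bit y i" by auto
    then show False using fd_bit[of x y] ne unfolding x_def y_def by simp
  qed
qed

lemma col_bound:
  assumes "u \<in> verts G"
  shows "col G idf s u j < 2 ^ Ls c (card (verts G)) s"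
  using assms
proof (induction s arbitrary: u)
  case 0
  have n1: "card (verts G) \<ge> 1" using fin 0 by (metis One_nat_def Suc_leI card_gt_0_iff empty_iff)
  have "idf u \<le> card (verts G) ^ c" using vid 0 unfolding valid_ids_def by auto
  also have "\<dots> < 2 ^ L0 c (card (verts G))" by (rule L0_bound[OF n1])
  finally show ?case by simp
next
  case (Suc s)
  define L where "L = Ls c (card (verts G)) s"
  have L1: "L \<ge> 1" unfolding L_def by (rule Ls_pos)
  have x: "col G idf s u j < 2 ^ L" using Suc unfolding L_def by simp
  have nx: "2 * L \<le> 2 ^ nxt L" by (rule nxt_ge)
  show ?case
  proof (cases "par G idf j u")
    case None
    then have "col G idf (Suc s) u j = nc (col G idf s u j) 0" by simp
    also have "\<dots> < 2 * 1" by (rule nc_less) simp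
    also have "\<dots> \<le> 2 * L" using L1 by simp
    finally show ?thesis using nx unfolding L_def by simp
  next
    case (Some w)
    have wv: "w \<in> verts G" using par_Some[OF Some] by simp
    have y: "col G idf s w j < 2 ^ L" using Suc.IH[OF wv] unfolding L_def by simp
    have ne: "col G idf s u j \<noteq> col G idf s w j" by (rule col_proper[OF Some])
    have "col G idf (Suc s) u j = nc (col G idf s u j) (fd (col G idf s u j) (col G idf s w j))"
      using Some by simp
    also have "\<dots> < 2 * L" by (rule nc_less[OF fd_less[OF ne x y]])
    finally show ?thesis using nx unfolding L_def by simp
  qed
qed

lemma color_in:
  assumes "u \<in> verts G" shows "color G idf u \<in> set PL"
proof -
  have "\<forall>j. col G idf (SS G) u j < K0"
  proof
    fix j
    have "col G idf (SS G) u j < 2 ^ Ls c (card (verts G)) (SS G)" by (rule col_bound[OF assms])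
    also have "\<dots> \<le> 2 ^ (3 * c + 10)" unfolding SS_def by (rule power_increasing[OF Ls_final]) simp
    finally show "col G idf (SS G) u j < K0" unfolding K0_def .
  qed
  then show ?thesis unfolding PL_def set_n_lists color_def by auto
qed

lemma length_outs:
  assumes "u \<in> verts G" shows "length (outs G idf u) \<le> nf"
proof -
  have sub: "{x \<in> ball G u kk. idf u < idf x} \<subseteq> ball G u kk" by blast
  have fb: "finite (ball G u kk)" using fin ball_sub[of G u kk] by (rule finite_subset[rotated])
  have "length (outs G idf u) = card (idf ` {x \<in> ball G u kk. idf u < idf x})"
    unfolding outs_def by simp
  also have "\<dots> \<le> card {x \<in> ball G u kk. idf u < idf x}" by (rule card_image_le[OF finite_subset[OF sub fb]])
  also have "\<dots> \<le> card (ball G u kk)" by (rule card_mono[OF fb sub])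
  also have "\<dots> \<le> (\<Delta> + 1) ^ kk" by (rule card_ball[OF wf degG[OF GG] assms])
  finally show ?thesis unfolding nf_def .
qed

lemma color_dist_aux:
  assumes "u \<in> verts G" "w \<in> verts G" "dist_le G kk u w" "idf u < idf w"
  shows "color G idf u \<noteq> color G idf w"
proof -
  have "w \<in> ball G u kk" using assms unfolding ball_def by simp
  then have "idf w \<in> set (outs G idf u)" unfolding outs_set using assms(4) by auto
  then obtain j where j: "j < length (outs G idf u)" "outs G idf u ! j = idf w"
    by (auto simp: in_set_conv_nth)
  have "par G idf j u = Some w" unfolding par_def using j the_inv_into_f_f[OF inj assms(2)] by simp
  then have ne: "col G idf (SS G) u j \<noteq> col G idf (SS G) w j" by (rule col_proper)
  have jn: "j < nf" using j(1) length_outs[OF assms(1)] by simp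
  have "color G idf u ! j \<noteq> color G idf w ! j" unfolding color_def using jn ne by simp
  then show ?thesis by metis
qed

lemma color_dist:
  assumes "u \<in> verts G" "w \<in> verts G" "dist_le G kk u w" "u \<noteq> w"
  shows "color G idf u \<noteq> color G idf w"
proof -
  have "idf u \<noteq> idf w" using inj assms unfolding inj_on_def by blast
  then consider "idf u < idf w" | "idf w < idf u" by linarith
  then show ?thesis
  proof cases
    case 1 then show ?thesis using color_dist_aux assms by blast
  next
    case 2
    have "dist_le G kk w u" using dist_le_sym[OF wf assms(3)] .
    then show ?thesis using color_dist_aux[OF assms(2,1) _ 2] by metis
  qed
qed

lemma sep:
  assumes "w1 \<in> verts G" "w2 \<in> verts G" "active G idf p w1" "active G idf p w2" "dist_le G kk w1 w2"
  shows "w1 = w2"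
  using color_dist[OF assms(1,2,5)] assms(3,4) unfolding active_def by auto

lemma pick_Some:
  assumes "pick G idf p u = Some w"
  shows "w \<in> verts G \<and> active G idf p w \<and> dist_le G T w u"
proof -
  have ex: "\<exists>w\<in>verts G. active G idf p w \<and> dist_le G T w u" and
    w: "w = (SOME w. w \<in> verts G \<and> active G idf p w \<and> dist_le G T w u)"
    using assms unfolding pick_def by (auto split: if_splits)
  from ex have "\<exists>w. w \<in> verts G \<and> active G idf p w \<and> dist_le G T w u" by blast
  from someI_ex[OF this] show ?thesis unfolding w[symmetric] .
qed

lemma pick_unique:
  assumes "w \<in> verts G" "active G idf p w" "dist_le G T w u"
  shows "pick G idf p u = Some w"
proof -
  have ex: "\<exists>w\<in>verts G. active G idf p w \<and> dist_le G T w u" using assms by blast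
  then have pk: "pick G idf p u = Some (SOME w. w \<in> verts G \<and> active G idf p w \<and> dist_le G T w u)"
    unfolding pick_def by simp
  then have w0: "(SOME w. w \<in> verts G \<and> active G idf p w \<and> dist_le G T w u) \<in> verts G \<and>
      active G idf p (SOME w. w \<in> verts G \<and> active G idf p w \<and> dist_le G T w u) \<and>
      dist_le G T (SOME w. w \<in> verts G \<and> active G idf p w \<and> dist_le G T w u) u"
    using pick_Some by blast
  define w0 where "w0 = (SOME w. w \<in> verts G \<and> active G idf p w \<and> dist_le G T w u)"
  have "dist_le G T u w" using dist_le_sym[OF wf assms(3)] .
  then have "dist_le G (T + T) w0 w" using w0 unfolding w0_def[symmetric] by (metis dist_le_trans)
  then have "dist_le G kk w0 w" by (rule dist_le_mono) (simp add: kk_def)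
  then have "w0 = w" using sep w0 assms unfolding w0_def[symmetric] by blast
  then show ?thesis using pk unfolding w0_def by simp
qed

lemma Pset_nonempty:
  assumes acc: "accepts_star \<Gamma> \<psi> r G lam" and wv: "w \<in> verts G"
  shows "\<exists>m. m \<in> Pset G idf lam w"
proof -
  obtain \<mu> where mu: "is_mend \<Gamma> \<psi> r G lam w T \<mu>"
    using mend GG acc wv unfolding mendable_def by blast
  have accmu: "accepts_star \<Gamma> \<psi> r G \<mu>" and muw: "\<mu> w \<noteq> None"
    and none: "\<forall>u\<in>verts G. \<mu> u = None \<longrightarrow> lam u = None"
    and far: "\<forall>u\<in>verts G. \<mu> u \<noteq> lam u \<longrightarrow> dist_le G T w u"
    using mu unfolding is_mend_def by auto
  define m where "m = (\<lambda>i. if i \<in> idf ` ball G w T then \<mu> (the_inv_into (verts G) idf i) else None)"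
  have mu_m: "m (idf u) = \<mu> u" if "u \<in> ball G w T" for u
    using that the_inv_into_f_f[OF inj] ball_sub[of G w T] unfolding m_def by auto
  have app_eq: "app G idf lam w m u = \<mu> u" if "u \<in> verts G" for u
    using that mu_m far unfolding app_def ball_def by auto
  have "m \<in> Pset G idf lam w"
    unfolding Pset_def
  proof (intro CollectI conjI allI impI ballI)
    fix i assume "i \<notin> idf ` ball G w T" then show "m i = None" unfolding m_def by simp
  next
    fix i x assume mi: "m i = Some x"
    then obtain u where u: "u \<in> ball G w T" "i = idf u" unfolding m_def by (auto split: if_splits)
    then have "\<mu> u = Some x" using mi mu_m by simp
    moreover have "u \<in> verts G" using u ball_sub[of G w T] by blast
    ultimately show "x \<in> \<Gamma>" using accmu unfolding accepts_star_def partial_labeling_def by blast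
  next
    show "m (idf w) \<noteq> None" using mu_m[of w] wv muw by simp
  next
    fix u assume "u \<in> ball G w T" "m (idf u) = None"
    then show "lam u = None" using mu_m none ball_sub[of G w T] by auto
  next
    fix u assume u: "u \<in> ball G w (T + r)"
    then have uv: "u \<in> verts G" using ball_sub[of G w "T + r"] by blast
    have "\<forall>a\<in>ball G u r. app G idf lam w m a = \<mu> a" using app_eq ball_sub[of G u r] by blast
    then have "psi_star \<Gamma> \<psi> r G (app G idf lam w m) u = psi_star \<Gamma> \<psi> r G \<mu> u" by (rule psi_star_local)
    then show "psi_star \<Gamma> \<psi> r G (app G idf lam w m) u" using accmu uv unfolding accepts_star_def by blast
  qed
  then show ?thesis by blast
qed

definition mw :: "nat \<Rightarrow> 'v \<Rightarrow> nat \<Rightarrow> 'o option" where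
  "mw p w = (SOME m. m \<in> Pset G idf (lab G idf p) w)"

lemma lab_Suc: "lab G idf (Suc p) u = (case pick G idf p u of None \<Rightarrow> lab G idf p u | Some w \<Rightarrow> mw p w (idf u))"
  unfolding mw_def by simp

lemma phase_inv:
  "accepts_star \<Gamma> \<psi> r G (lab G idf p) \<and> (\<forall>u\<in>verts G. \<forall>q<p. active G idf q u \<longrightarrow> lab G idf p u \<noteq> None)"
proof (induction p)
  case 0
  have "psi_star \<Gamma> \<psi> r G (\<lambda>_. None) u" if "u \<in> verts G" for u
    unfolding psi_star_def using ball_center[OF that, of r] by blast
  then show ?case unfolding accepts_star_def partial_labeling_def by simp
next
  case (Suc p)
  have acc: "accepts_star \<Gamma> \<psi> r G (lab G idf p)" using Suc.IH by blast
  have mwP: "mw p w \<in> Pset G idf (lab G idf p) w" if "w \<in> verts G" for w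
    unfolding mw_def using Pset_nonempty[OF acc that] by (rule someI_ex)
  have part: "partial_labeling G \<Gamma> (lab G idf (Suc p))"
    unfolding partial_labeling_def
  proof (intro ballI allI impI)
    fix u x assume u: "u \<in> verts G" and lx: "lab G idf (Suc p) u = Some x"
    show "x \<in> \<Gamma>"
    proof (cases "pick G idf p u")
      case None then show ?thesis using lx u acc unfolding lab_Suc accepts_star_def partial_labeling_def by auto
    next
      case (Some w)
      then have "mw p w \<in> Pset G idf (lab G idf p) w" using mwP pick_Some by blast
      then show ?thesis using lx Some unfolding lab_Suc Pset_def by auto
    qed
  qed
  have psi: "psi_star \<Gamma> \<psi> r G (lab G idf (Suc p)) u" if u: "u \<in> verts G" for u
  proof (cases "\<exists>w\<in>verts G. active G idf p w \<and> dist_le G (T + r) w u")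
    case True
    then obtain w where w: "w \<in> verts G" "active G idf p w" "dist_le G (T + r) w u" by blast
    have agree: "\<forall>a\<in>ball G u r. lab G idf (Suc p) a = app G idf (lab G idf p) w (mw p w) a"
    proof
      fix a assume a: "a \<in> ball G u r"
      then have av: "a \<in> verts G" and ua: "dist_le G r u a" unfolding ball_def by auto
      show "lab G idf (Suc p) a = app G idf (lab G idf p) w (mw p w) a"
      proof (cases "a \<in> ball G w T")
        case True
        then have "pick G idf p a = Some w" using pick_unique w unfolding ball_def by blast
        then show ?thesis using True unfolding lab_Suc app_def by simp
      next
        case False
        have "pick G idf p a = None"
        proof (rule ccontr)
          assume "pick G idf p a \<noteq> None"
          then obtain w' where "pick G idf p a = Some w'" by blast
          then have w': "w' \<in> verts G" "active G idf p w'" "dist_le G T w' a" using pick_Some by blast+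
          have "dist_le G T a w'" using dist_le_sym[OF wf w'(3)] .
          then have "dist_le G (T + r + r + T) w w'" using w(3) ua by (metis dist_le_trans)
          then have "dist_le G kk w w'" by (rule dist_le_mono) (simp add: kk_def)
          then have "w = w'" using sep w w' by blast
          then show False using False w'(3) av unfolding ball_def by simp
        qed
        then show ?thesis using False unfolding lab_Suc app_def by simp
      qed
    qed
    have "u \<in> ball G w (T + r)" using w u unfolding ball_def by simp
    then have "psi_star \<Gamma> \<psi> r G (app G idf (lab G idf p) w (mw p w)) u"
      using mwP[OF w(1)] unfolding Pset_def by blast
    then show ?thesis using psi_star_local[OF agree] by simp
  next
    case False
    have agree: "\<forall>a\<in>ball G u r. lab G idf (Suc p) a = lab G idf p a"
    proof
      fix a assume a: "a \<in> ball G u r"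
      then have ua: "dist_le G r u a" unfolding ball_def by auto
      have "pick G idf p a = None"
      proof (rule ccontr)
        assume "pick G idf p a \<noteq> None"
        then obtain w' where "pick G idf p a = Some w'" by blast
        then have w': "w' \<in> verts G" "active G idf p w'" "dist_le G T w' a" using pick_Some by blast+
        have "dist_le G r a u" using dist_le_sym[OF wf ua] .
        then have "dist_le G (T + r) w' u" using w'(3) by (metis dist_le_trans)
        then show False using False w' by blast
      qed
      then show "lab G idf (Suc p) a = lab G idf p a" unfolding lab_Suc by simp
    qed
    then show ?thesis using psi_star_local[OF agree] acc u unfolding accepts_star_def by simp
  qed
  have labd: "lab G idf (Suc p) u \<noteq> None" if u: "u \<in> verts G" and q: "q < Suc p" "active G idf q u" for u q
  proof (cases "q = p")
    case True
    then have "pick G idf p u = Some u" using pick_unique[OF u] q by simp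
    then show ?thesis using mwP[OF u] unfolding lab_Suc Pset_def by simp
  next
    case False
    then have "q < p" using q by simp
    then have prev: "lab G idf p u \<noteq> None" using Suc.IH u q by blast
    show ?thesis
    proof (cases "pick G idf p u")
      case None then show ?thesis using prev unfolding lab_Suc by simp
    next
      case (Some w)
      then have w: "w \<in> verts G" "dist_le G T w u" using pick_Some by blast+
      then have "u \<in> ball G w T" using u unfolding ball_def by simp
      then show ?thesis using mwP[OF w(1)] prev Some unfolding lab_Suc Pset_def by auto
    qed
  qed
  show ?case using part psi labd unfolding accepts_star_def by blast
qed

theorem Out_solution: "is_solution \<Gamma> \<psi> G (\<lambda>u. Out G idf u)"
proof -
  have acc: "accepts_star \<Gamma> \<psi> r G (lab G idf KK)" using phase_inv by blast
  have labd: "lab G idf KK u \<noteq> None" if u: "u \<in> verts G" for u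
  proof -
    have "color G idf u \<in> set PL" by (rule color_in[OF u])
    then obtain q where q: "q < KK" "PL ! q = color G idf u" unfolding KK_def by (auto simp: in_set_conv_nth)
    then have "active G idf q u" unfolding active_def by simp
    then show ?thesis using phase_inv[of KK] u q by blast
  qed
  have some: "lab G idf KK u = Some (Out G idf u)" if "u \<in> verts G" for u
    using labd[OF that] unfolding Out_def by auto
  have lin: "labeling_in G \<Gamma> (\<lambda>u. Out G idf u)"
    unfolding labeling_in_def using some acc unfolding accepts_star_def partial_labeling_def by blast
  have "\<psi> G (\<lambda>u. Out G idf u) u" if u: "u \<in> verts G" for u
  proof -
    have ps: "psi_star \<Gamma> \<psi> r G (lab G idf KK) u" using acc u unfolding accepts_star_def by blast
    have "\<not> (\<exists>a\<in>ball G u r. lab G idf KK a = None)" using labd ball_sub[of G u r] by blast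
    then show ?thesis using ps lin some ball_sub[of G u r] unfolding psi_star_def by blast
  qed
  then show ?thesis unfolding is_solution_def using lin by blast
qed

end

end

section \<open>Locality\<close>

lemma ball_mono: "k \<le> k' \<Longrightarrow> ball G v k \<subseteq> ball G v k'"
proof
  fix x assume "k \<le> k'" "x \<in> ball G v k"
  then show "x \<in> ball G v k'" unfolding ball_def using dist_le_mono[of G k v x k'] by simp
qed

locale loc2 =
  fixes G :: "('v,'i) igraph" and idf :: "'v \<Rightarrow> nat" and v :: 'v
    and G' :: "('v,'i) igraph" and idf' :: "'v \<Rightarrow> nat" and v' :: 'v and R :: nat
  assumes wf1: "wf_graph G" and wf2: "wf_graph G'"
    and inj1: "inj_on idf (verts G)" and inj2: "inj_on idf' (verts G')"
    and v1: "v \<in> verts G" and v2: "v' \<in> verts G'"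
    and view: "local_view G idf R v = local_view G' idf' R v'"
begin

definition f :: "'v \<Rightarrow> 'v" where "f u = the_inv_into (verts G') idf' (idf u)"

lemma n_eq: "card (verts G) = card (verts G')"
  and id_eq: "idf v = idf' v'"
  and ids_eq: "idf ` ball G v R = idf' ` ball G' v' R"
  and edges_eq: "{(idf a, idf b) | a b. a \<in> ball G v R \<and> b \<in> ball G v R \<and> adj G a b} =
     {(idf' a, idf' b) | a b. a \<in> ball G' v' R \<and> b \<in> ball G' v' R \<and> adj G' a b}"
  and inp_eq: "{(idf a, inp G a) | a. a \<in> ball G v R} = {(idf' a, inp G' a) | a. a \<in> ball G' v' R}"
  using view unfolding local_view_def Let_def by simp_all

lemma sym: "loc2 G' idf' v' G idf v R"
  using wf1 wf2 inj1 inj2 v1 v2 view by unfold_locales simp_all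

lemma f_eq_of: assumes "a' \<in> verts G'" "idf' a' = idf a" shows "f a = a'"
proof -
  have "f a = the_inv_into (verts G') idf' (idf' a')" unfolding f_def using assms(2) by simp
  also have "\<dots> = a'" by (rule the_inv_into_f_f[OF inj2 assms(1)])
  finally show ?thesis .
qed

lemma f_B: assumes "u \<in> ball G v R" shows "f u \<in> ball G' v' R \<and> idf' (f u) = idf u"
proof -
  have "idf u \<in> idf ` ball G v R" using assms by (rule imageI)
  then have "idf u \<in> idf' ` ball G' v' R" unfolding ids_eq .
  then obtain u' where u': "u' \<in> ball G' v' R" "idf' u' = idf u" by (auto simp del: in_ball)
  have "u' \<in> verts G'" using u'(1) ball_sub[of G' v' R] by blast
  then have "f u = u'" using u'(2) by (rule f_eq_of)
  then show ?thesis using u' by simp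
qed

lemma f_v: "f v = v'"
  using f_eq_of[OF v2] id_eq by simp

lemma f_eqD: assumes "a \<in> ball G v R" "b \<in> ball G v R" "f a = f b" shows "a = b"
proof -
  have "idf a = idf' (f a)" using f_B[OF assms(1)] by simp
  also have "\<dots> = idf' (f b)" using assms(3) by simp
  also have "\<dots> = idf b" using f_B[OF assms(2)] by simp
  finally have "idf a = idf b" .
  moreover have "a \<in> verts G" "b \<in> verts G" using assms(1,2) ball_sub[of G v R] by blast+
  ultimately show ?thesis using inj1 unfolding inj_on_def by blast
qed

lemma f_inj: "inj_on f (ball G v R)"
  unfolding inj_on_def using f_eqD by blast

lemma f_adj: assumes "a \<in> ball G v R" "b \<in> ball G v R" "adj G a b" shows "adj G' (f a) (f b)"
proof -
  have "(idf a, idf b) \<in> {(idf a, idf b) | a b. a \<in> ball G v R \<and> b \<in> ball G v R \<and> adj G a b}"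
    using assms by (intro CollectI exI conjI) (rule refl)
  then have "(idf a, idf b) \<in> {(idf' a, idf' b) | a b. a \<in> ball G' v' R \<and> b \<in> ball G' v' R \<and> adj G' a b}"
    unfolding edges_eq .
  then obtain a' b' where ab: "a' \<in> ball G' v' R" "b' \<in> ball G' v' R" "adj G' a' b'"
    "idf' a' = idf a" "idf' b' = idf b" by auto
  have "a' \<in> verts G'" "b' \<in> verts G'" using ab ball_sub[of G' v' R] by blast+
  then have "f a = a'" "f b = b'" using ab(4,5) f_eq_of by blast+
  then show ?thesis using ab by simp
qed

lemma f_inp: assumes "a \<in> ball G v R" shows "inp G' (f a) = inp G a"
proof -
  have "(idf a, inp G a) \<in> {(idf a, inp G a) | a. a \<in> ball G v R}"
    using assms by (intro CollectI exI conjI) (rule refl)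
  then have "(idf a, inp G a) \<in> {(idf' a, inp G' a) | a. a \<in> ball G' v' R}" unfolding inp_eq .
  then obtain a' where a': "a' \<in> ball G' v' R" "idf' a' = idf a" "inp G' a' = inp G a" by auto
  have "a' \<in> verts G'" using a' ball_sub[of G' v' R] by blast
  then have "f a = a'" using a'(2) f_eq_of by blast
  then show ?thesis using a' by simp
qed

lemma path:
  assumes "u \<in> ball G v \<rho>" "\<rho> + j \<le> R" "(u, w) \<in> E G ^^ j"
  shows "w \<in> ball G v (\<rho> + j) \<and> (f u, f w) \<in> E G' ^^ j"
  using assms(2,3)
proof (induction j arbitrary: w)
  case 0 then show ?case using assms(1) by simp
next
  case (Suc j)
  from Suc.prems(2) obtain y where y: "(u, y) \<in> E G ^^ j" "(y, w) \<in> E G" by (rule relpow_Suc_E)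
  have IH: "y \<in> ball G v (\<rho> + j)" "(f u, f y) \<in> E G' ^^ j" using Suc.IH[OF _ y(1)] Suc.prems by auto
  have ayw: "adj G y w" using y(2) by simp
  have wv: "w \<in> verts G" using adj_verts[OF wf1 ayw] by blast
  have "dist_le G 1 y w" unfolding dist_le_def using y(2) by (intro exI[of _ 1]) auto
  then have "dist_le G (\<rho> + j + 1) v w" using IH(1) unfolding ball_def by (metis dist_le_trans mem_Collect_eq)
  then have wb: "w \<in> ball G v (\<rho> + Suc j)" using wv unfolding ball_def by simp
  have yB: "y \<in> ball G v R" using IH(1) ball_mono[of "\<rho> + j" R G v] Suc.prems by auto
  have wB: "w \<in> ball G v R" using wb ball_mono[of "\<rho> + Suc j" R G v] Suc.prems by auto
  have "adj G' (f y) (f w)" by (rule f_adj[OF yB wB ayw])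
  then have "(f y, f w) \<in> E G'" by simp
  with IH(2) have "(f u, f w) \<in> E G' ^^ Suc j" by (rule relpow_Suc_I)
  then show ?case using wb by simp
qed

lemma dist_fwd:
  assumes "u \<in> ball G v \<rho>" "\<rho> + \<sigma> \<le> R" "dist_le G \<sigma> u w"
  shows "w \<in> ball G v (\<rho> + \<sigma>) \<and> dist_le G' \<sigma> (f u) (f w)"
proof -
  obtain j where j: "j \<le> \<sigma>" "(u, w) \<in> E G ^^ j" using assms(3) unfolding dist_le_def by auto
  have "w \<in> ball G v (\<rho> + j) \<and> (f u, f w) \<in> E G' ^^ j" using path[OF assms(1) _ j(2)] j assms(2) by simp
  then show ?thesis using j ball_mono[of "\<rho> + j" "\<rho> + \<sigma>" G v] unfolding dist_le_def by auto
qed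

lemma ballB: "\<rho> \<le> R \<Longrightarrow> u \<in> ball G v \<rho> \<Longrightarrow> u \<in> ball G v R"
  using ball_mono[of \<rho> R G v] by blast

lemma f_ball_rho:
  assumes "u \<in> ball G v \<rho>" "\<rho> \<le> R" shows "f u \<in> ball G' v' \<rho>"
proof -
  have "v \<in> ball G v 0" using v1 by simp
  moreover have "dist_le G \<rho> v u" using assms(1) unfolding ball_def by simp
  ultimately have "dist_le G' \<rho> (f v) (f u)" using dist_fwd[of v 0 \<rho> u] assms(2) by simp
  moreover have "f u \<in> verts G'" using f_B[OF ballB[OF assms(2,1)]] ball_sub[of G' v' R] by blast
  ultimately show ?thesis unfolding ball_def f_v by simp
qed

end

lemma (in loc2) gf: assumes "u \<in> ball G v R" shows "loc2.f idf' G idf (f u) = u"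
proof -
  interpret s: loc2 G' idf' v' G idf v R by (rule sym)
  have "idf u = idf' (f u)" using f_B[OF assms] by simp
  moreover have "u \<in> verts G" using assms ball_sub[of G v R] by blast
  ultimately show ?thesis using s.f_eq_of by blast
qed

context loc2 begin

lemma ball_img:
  assumes "u \<in> ball G v \<rho>" "\<rho> + \<sigma> \<le> R"
  shows "f ` ball G u \<sigma> = ball G' (f u) \<sigma>"
proof
  show "f ` ball G u \<sigma> \<subseteq> ball G' (f u) \<sigma>"
  proof
    fix x' assume "x' \<in> f ` ball G u \<sigma>"
    then obtain x where x: "x \<in> ball G u \<sigma>" "x' = f x" by blast
    have d: "x \<in> ball G v (\<rho> + \<sigma>) \<and> dist_le G' \<sigma> (f u) (f x)"
      using dist_fwd[OF assms] x unfolding ball_def by auto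
    then have "f x \<in> verts G'" using f_B[OF ballB[OF assms(2)]] ball_sub[of G' v' R] by blast
    then show "x' \<in> ball G' (f u) \<sigma>" using d x unfolding ball_def by simp
  qed
next
  show "ball G' (f u) \<sigma> \<subseteq> f ` ball G u \<sigma>"
  proof
    fix x' assume x': "x' \<in> ball G' (f u) \<sigma>"
    interpret s: loc2 G' idf' v' G idf v R by (rule sym)
    have fu: "f u \<in> ball G' v' \<rho>" using f_ball_rho assms by simp
    have d: "x' \<in> ball G' v' (\<rho> + \<sigma>) \<and> dist_le G \<sigma> (s.f (f u)) (s.f x')"
      using s.dist_fwd[OF fu assms(2)] x' unfolding ball_def by auto
    have uB: "u \<in> ball G v R" using ballB[of \<rho> u] assms by simp
    have x'B: "x' \<in> ball G' v' R" using d s.ballB[OF assms(2)] by blast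
    have "s.f (f u) = u" using gf[OF uB] by simp
    moreover have "s.f x' \<in> verts G" using s.f_B[OF x'B] ball_sub[of G v R] by blast
    ultimately have "s.f x' \<in> ball G u \<sigma>" using d unfolding ball_def by simp
    moreover have "f (s.f x') = x'" using s.gf[OF x'B] by simp
    ultimately show "x' \<in> f ` ball G u \<sigma>" by force
  qed
qed

lemma ball_mem_iff:
  assumes "w \<in> ball G v \<rho>" "\<rho> + \<sigma> \<le> R" "a \<in> ball G v R"
  shows "f a \<in> ball G' (f w) \<sigma> \<longleftrightarrow> a \<in> ball G w \<sigma>"
proof -
  have sub: "ball G w \<sigma> \<subseteq> ball G v R"
  proof
    fix x assume "x \<in> ball G w \<sigma>"
    then have "x \<in> ball G v (\<rho> + \<sigma>)" using dist_fwd[OF assms(1,2)] unfolding ball_def by auto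
    then show "x \<in> ball G v R" using ballB[OF assms(2)] by blast
  qed
  have "f a \<in> f ` ball G w \<sigma> \<longleftrightarrow> a \<in> ball G w \<sigma>"
    using f_inj sub assms(3) by (auto dest: f_eqD)
  then show ?thesis using ball_img[OF assms(1,2)] by simp
qed

lemma ball_in_ball:
  assumes "w \<in> ball G v \<rho>" "\<rho> + \<sigma> \<le> R" "a \<in> ball G w \<sigma>"
  shows "a \<in> ball G v (\<rho> + \<sigma>)"
  using dist_fwd[OF assms(1,2)] assms(3) unfolding ball_def by auto

end

locale loc3 = setting \<G> \<Gamma> \<psi> r T \<Delta> c + loc2 G idf v G' idf' v' R
  for \<G> :: "('v,'i) igraph set" and \<Gamma> :: "'o set" and \<psi> r T \<Delta> c
    and G :: "('v,'i) igraph" and idf v and G' :: "('v,'i) igraph" and idf' v' R +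
  assumes GG1: "G \<in> \<G>" and GG2: "G' \<in> \<G>" and vid1: "valid_ids G c idf" and vid2: "valid_ids G' c idf'"
begin

lemma idff: "x \<in> ball G v R \<Longrightarrow> idf' (f x) = idf x"
  using f_B by blast

lemma in_B: "\<rho> \<le> R \<Longrightarrow> x \<in> ball G v \<rho> \<Longrightarrow> x \<in> ball G v R"
  by (rule ballB)

lemma adj_iff:
  assumes "a \<in> ball G v R" "b \<in> ball G v R"
  shows "adj G' (f a) (f b) \<longleftrightarrow> adj G a b"
proof
  assume "adj G a b" then show "adj G' (f a) (f b)" using f_adj assms by blast
next
  assume a: "adj G' (f a) (f b)"
  interpret s: loc2 G' idf' v' G idf v R by (rule sym)
  have "f a \<in> ball G' v' R" "f b \<in> ball G' v' R" using f_B assms by blast+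
  then have "adj G (s.f (f a)) (s.f (f b))" using s.f_adj a by blast
  then show "adj G a b" using gf assms by simp
qed

lemma psi_transfer:
  assumes u: "u \<in> ball G v \<rho>" and rr: "\<rho> + r \<le> R" and agree: "\<forall>a\<in>ball G u r. \<mu>' (f a) = \<mu> a"
  shows "psi_star \<Gamma> \<psi> r G' \<mu>' (f u) = psi_star \<Gamma> \<psi> r G \<mu> u"
proof -
  interpret s: loc2 G' idf' v' G idf v R by (rule sym)
  define Bu where "Bu = ball G u r"
  have img: "ball G' (f u) r = f ` Bu" unfolding Bu_def using ball_img[OF u rr] by simp
  have BuB: "Bu \<subseteq> ball G v R"
  proof
    fix a assume "a \<in> Bu"
    then have "a \<in> ball G v (\<rho> + r)" unfolding Bu_def using ball_in_ball[OF u rr] by blast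
    then show "a \<in> ball G v R" using in_B[OF rr] by blast
  qed
  have uB: "u \<in> ball G v R" using in_B[of \<rho> u] u rr by simp
  have uv: "u \<in> verts G" using uB ball_sub[of G v R] by blast
  have fuv: "f u \<in> verts G'" using f_B[OF uB] ball_sub[of G' v' R] by blast
  have iso: "ball_iso G l u G' l' (f u) r f" if la: "\<forall>a\<in>Bu. l' (f a) = l a" for l l'
  proof -
    have "bij_betw f (ball G u r) (ball G' (f u) r)"
      unfolding img Bu_def[symmetric] bij_betw_def using inj_on_subset[OF f_inj BuB] by simp
    moreover have "\<forall>a\<in>ball G u r. \<forall>b\<in>ball G u r. adj G' (f a) (f b) = adj G a b"
      using adj_iff BuB unfolding Bu_def by blast
    moreover have "\<forall>a\<in>ball G u r. inp G' (f a) = inp G a \<and> l' (f a) = l a"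
      using f_inp BuB la unfolding Bu_def by blast
    ultimately show ?thesis unfolding ball_iso_def by blast
  qed
  have none_iff: "(\<exists>a'\<in>ball G' (f u) r. \<mu>' a' = None) \<longleftrightarrow> (\<exists>a\<in>ball G u r. \<mu> a = None)"
    unfolding img Bu_def using agree by auto
  show ?thesis
  proof (cases "\<Gamma> = {}")
    case True
    have "\<not> labeling_in G \<Gamma> l" for l using True uv unfolding labeling_in_def by blast
    moreover have "\<not> labeling_in G' \<Gamma> l" for l using True fuv unfolding labeling_in_def by blast
    ultimately show ?thesis unfolding psi_star_def by blast
  next
    case False
    then obtain g0 where g0: "g0 \<in> \<Gamma>" by blast
    have A1: "\<psi> G' l' (f u)"
      if H: "\<forall>l. labeling_in G \<Gamma> l \<and> (\<forall>a\<in>ball G u r. \<mu> a = Some (l a)) \<longrightarrow> \<psi> G l u"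
        and l': "labeling_in G' \<Gamma> l'" "\<forall>a'\<in>ball G' (f u) r. \<mu>' a' = Some (l' a')" for l'
    proof -
      define l where "l = (\<lambda>a. if a \<in> Bu then l' (f a) else g0)"
      have ll: "labeling_in G \<Gamma> l" unfolding labeling_in_def l_def
      proof
        fix a assume "a \<in> verts G"
        show "(if a \<in> Bu then l' (f a) else g0) \<in> \<Gamma>"
        proof (cases "a \<in> Bu")
          case True
          then have "f a \<in> verts G'" using f_B BuB ball_sub[of G' v' R] by blast
          then show ?thesis using True l'(1) unfolding labeling_in_def by simp
        qed (simp add: g0)
      qed
      have "\<forall>a\<in>ball G u r. \<mu> a = Some (l a)"
      proof
        fix a assume a: "a \<in> ball G u r"
        then have "f a \<in> ball G' (f u) r" unfolding img Bu_def by blast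
        then have "\<mu>' (f a) = Some (l' (f a))" using l'(2) by blast
        moreover have "\<mu>' (f a) = \<mu> a" using agree a by blast
        ultimately show "\<mu> a = Some (l a)" using a unfolding l_def Bu_def by simp
      qed
      then have psi: "\<psi> G l u" using H ll by blast
      have "ball_iso G l u G' l' (f u) r f" by (rule iso) (simp add: l_def)
      then have "\<psi> G l u = \<psi> G' l' (f u)"
        using lv GG1 GG2 ll l'(1) uv fuv unfolding local_verifier_def by blast
      then show ?thesis using psi by simp
    qed
    have A2: "\<psi> G l u"
      if H: "\<forall>l'. labeling_in G' \<Gamma> l' \<and> (\<forall>a'\<in>ball G' (f u) r. \<mu>' a' = Some (l' a')) \<longrightarrow> \<psi> G' l' (f u)"
        and l: "labeling_in G \<Gamma> l" "\<forall>a\<in>ball G u r. \<mu> a = Some (l a)" for l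
    proof -
      define l' where "l' = (\<lambda>a'. if a' \<in> f ` Bu then l (s.f a') else g0)"
      have sff: "s.f (f a) = a" if "a \<in> Bu" for a using gf BuB that by blast
      have ll: "labeling_in G' \<Gamma> l'" unfolding labeling_in_def l'_def
      proof
        fix a' assume "a' \<in> verts G'"
        show "(if a' \<in> f ` Bu then l (s.f a') else g0) \<in> \<Gamma>"
        proof (cases "a' \<in> f ` Bu")
          case True
          then obtain a where a: "a \<in> Bu" "a' = f a" by blast
          then have "s.f a' = a" using sff by simp
          moreover have "a \<in> verts G" using a BuB ball_sub[of G v R] by blast
          ultimately show ?thesis using True l(1) unfolding labeling_in_def by simp
        qed (simp add: g0)
      qed
      have la: "\<forall>a\<in>Bu. l' (f a) = l a" unfolding l'_def using sff by auto
      have "\<forall>a'\<in>ball G' (f u) r. \<mu>' a' = Some (l' a')"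
      proof
        fix a' assume "a' \<in> ball G' (f u) r"
        then obtain a where a: "a \<in> Bu" "a' = f a" unfolding img by blast
        then show "\<mu>' a' = Some (l' a')" using agree l(2) la unfolding Bu_def by simp
      qed
      then have psi: "\<psi> G' l' (f u)" using H ll by blast
      have "ball_iso G l u G' l' (f u) r f" by (rule iso[OF la])
      then have "\<psi> G l u = \<psi> G' l' (f u)"
        using lv GG1 GG2 ll l(1) uv fuv unfolding local_verifier_def by blast
      then show ?thesis using psi by simp
    qed
    show ?thesis unfolding psi_star_def using none_iff A1 A2 by blast
  qed
qed

lemma outs_eq:
  assumes u: "u \<in> ball G v \<rho>" and rr: "\<rho> + kk \<le> R"
  shows "outs G' idf' (f u) = outs G idf u"
proof -
  have img: "ball G' (f u) kk = f ` ball G u kk" using ball_img[OF u rr] by simp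
  have sub: "ball G u kk \<subseteq> ball G v R" using ball_in_ball[OF u rr] in_B[OF rr] by blast
  have uB: "u \<in> ball G v R" using in_B[of \<rho> u] u rr by simp
  have fu: "idf' (f u) = idf u" using idff[OF uB] .
  have "idf' ` {x \<in> ball G' (f u) kk. idf' (f u) < idf' x} = idf ` {x \<in> ball G u kk. idf u < idf x}"
  proof (rule set_eqI, rule iffI)
    fix i assume "i \<in> idf' ` {x \<in> ball G' (f u) kk. idf' (f u) < idf' x}"
    then obtain x' where x': "x' \<in> ball G' (f u) kk" "idf' (f u) < idf' x'" "i = idf' x'" by blast
    then obtain x where x: "x \<in> ball G u kk" "x' = f x" unfolding img by blast
    have "idf' x' = idf x" using x sub idff by blast
    then show "i \<in> idf ` {x \<in> ball G u kk. idf u < idf x}" using x x' fu by auto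
  next
    fix i assume "i \<in> idf ` {x \<in> ball G u kk. idf u < idf x}"
    then obtain x where x: "x \<in> ball G u kk" "idf u < idf x" "i = idf x" by blast
    have "idf' (f x) = idf x" using x sub idff by blast
    moreover have "f x \<in> ball G' (f u) kk" unfolding img using x by blast
    ultimately show "i \<in> idf' ` {x \<in> ball G' (f u) kk. idf' (f u) < idf' x}" using x fu by force
  qed
  then show ?thesis unfolding outs_def by simp
qed

lemma par_eq:
  assumes u: "u \<in> ball G v \<rho>" and rr: "\<rho> + kk \<le> R"
  shows "par G' idf' j (f u) = map_option f (par G idf j u)"
proof (cases "j < length (outs G idf u)")
  case True
  have "outs G idf u ! j \<in> set (outs G idf u)" using True by simp
  then have "outs G idf u ! j \<in> idf ` verts G" unfolding outs_set[OF GG1 vid1] using ball_sub[of G u kk] by blast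
  then have "idf (the_inv_into (verts G) idf (outs G idf u ! j)) = outs G idf u ! j"
    by (rule f_the_inv_into_f[OF inj1])
  then have "f (the_inv_into (verts G) idf (outs G idf u ! j)) = the_inv_into (verts G') idf' (outs G idf u ! j)"
    unfolding f_def by simp
  moreover have "par G' idf' j (f u) = Some (the_inv_into (verts G') idf' (outs G idf u ! j))"
    unfolding par_def outs_eq[OF u rr] using True by simp
  moreover have "par G idf j u = Some (the_inv_into (verts G) idf (outs G idf u ! j))"
    unfolding par_def using True by simp
  ultimately show ?thesis by simp
next
  case False
  then show ?thesis unfolding par_def outs_eq[OF u rr] by simp
qed

lemma col_eq:
  assumes "u \<in> ball G v \<rho>" "\<rho> + Suc s * kk \<le> R"
  shows "col G' idf' s (f u) j = col G idf s u j"
  using assms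
proof (induction s arbitrary: \<rho> u)
  case 0
  then have "u \<in> ball G v R" using in_B[of \<rho> u] by simp
  then show ?case using idff by simp
next
  case (Suc s)
  have rr: "\<rho> + kk \<le> R" using Suc.prems by simp
  have IHu: "col G' idf' s (f u) j = col G idf s u j" using Suc.IH[of u \<rho>] Suc.prems by simp
  show ?case
  proof (cases "par G idf j u")
    case None
    then have "par G' idf' j (f u) = None" using par_eq[OF Suc.prems(1) rr] by simp
    then show ?thesis using None IHu by simp
  next
    case (Some w)
    then have p': "par G' idf' j (f u) = Some (f w)" using par_eq[OF Suc.prems(1) rr] by simp
    have "w \<in> ball G u kk" using par_Some[OF GG1 vid1 Some] by simp
    then have wb: "w \<in> ball G v (\<rho> + kk)" using ball_in_ball[OF Suc.prems(1) rr] by blast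
    have "col G' idf' s (f w) j = col G idf s w j" using Suc.IH[OF wb] Suc.prems(2) by (simp add: algebra_simps)
    then show ?thesis using Some p' IHu by simp
  qed
qed

lemma SS_eq: "SS G' = SS G"
  unfolding SS_def n_eq ..

lemma color_eq:
  assumes "u \<in> ball G v \<rho>" "\<rho> + Suc (SS G) * kk \<le> R"
  shows "color G' idf' (f u) = color G idf u"
  unfolding color_def SS_eq using col_eq[OF assms] by simp

lemma active_eq:
  assumes "u \<in> ball G v \<rho>" "\<rho> + Suc (SS G) * kk \<le> R"
  shows "active G' idf' p (f u) = active G idf p u"
  unfolding active_def using color_eq[OF assms] by simp

lemma kk_ge: "T \<le> kk" "2 * T + 2 * r < kk" unfolding kk_def by simp_all

lemma pick_eq:
  assumes u: "u \<in> ball G v \<rho>" and rr: "\<rho> + kk + Suc (SS G) * kk \<le> R"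
  shows "pick G' idf' p (f u) = map_option f (pick G idf p u)"
proof (cases "pick G idf p u")
  case (Some w)
  then have w: "w \<in> verts G" "active G idf p w" "dist_le G T w u" using pick_Some[OF GG1 vid1] by blast+
  have rT: "\<rho> + T \<le> R" using rr kk_ge by simp
  have duw: "dist_le G T u w" using dist_le_sym[OF wf1 w(3)] .
  have d: "w \<in> ball G v (\<rho> + T) \<and> dist_le G' T (f u) (f w)" using dist_fwd[OF u rT duw] .
  have "f w \<in> verts G'" using f_B d in_B[OF rT] ball_sub[of G' v' R] by blast
  moreover have "active G' idf' p (f w)" using active_eq[of w "\<rho> + T"] d w(2) rr kk_ge by simp
  moreover have "dist_le G' T (f w) (f u)" using dist_le_sym[OF wf2] d by blast
  ultimately have "pick G' idf' p (f u) = Some (f w)" by (rule pick_unique[OF GG2 vid2])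
  then show ?thesis using Some by simp
next
  case None
  have "pick G' idf' p (f u) = None"
  proof (rule ccontr)
    assume "pick G' idf' p (f u) \<noteq> None"
    then obtain w' where "pick G' idf' p (f u) = Some w'" by blast
    then have w': "w' \<in> verts G'" "active G' idf' p w'" "dist_le G' T w' (f u)"
      using pick_Some[OF GG2 vid2] by blast+
    have rT: "\<rho> + T \<le> R" using rr kk_ge by simp
    have "w' \<in> ball G' (f u) T" using w' dist_le_sym[OF wf2] unfolding ball_def by blast
    then obtain w where w: "w \<in> ball G u T" "w' = f w" unfolding ball_img[OF u rT, symmetric] by blast
    have wb: "w \<in> ball G v (\<rho> + T)" using ball_in_ball[OF u rT] w(1) by blast
    have "active G idf p w" using active_eq[OF wb] w' w rr kk_ge by simp
    moreover have "w \<in> verts G" "dist_le G T w u" using w(1) dist_le_sym[OF wf1] unfolding ball_def by blast+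
    ultimately have "\<exists>w\<in>verts G. active G idf p w \<and> dist_le G T w u" by blast
    then show False using None unfolding pick_def by simp
  qed
  then show ?thesis using None by simp
qed

lemma Pset_eq:
  assumes w: "w \<in> ball G v \<rho>" and rr: "\<rho> + T + 2 * r \<le> R"
    and agree: "\<forall>a\<in>ball G v (\<rho> + T + 2 * r). lam' (f a) = lam a"
  shows "Pset G' idf' lam' (f w) = Pset G idf lam w"
proof -
  have rT: "\<rho> + T \<le> R" using rr by simp
  have rTr: "\<rho> + (T + r) \<le> R" using rr by simp
  have wB: "w \<in> ball G v R" using in_B[of \<rho> w] w rT by simp
  have imgT: "ball G' (f w) T = f ` ball G w T" using ball_img[OF w rT] by simp
  have imgTr: "ball G' (f w) (T + r) = f ` ball G w (T + r)" using ball_img[OF w rTr] by simp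
  have subT: "ball G w T \<subseteq> ball G v (\<rho> + T + 2 * r)"
    using ball_in_ball[OF w rT] ball_mono[of "\<rho> + T" "\<rho> + T + 2 * r" G v] by auto
  have subR: "ball G v (\<rho> + T + 2 * r) \<subseteq> ball G v R" using in_B[OF rr] by blast
  have e1: "idf' ` ball G' (f w) T = idf ` ball G w T"
  proof -
    have "idf' ` ball G' (f w) T = (\<lambda>x. idf' (f x)) ` ball G w T" unfolding imgT by (simp add: image_image)
    also have "\<dots> = idf ` ball G w T" using subT subR idff by (intro image_cong) auto
    finally show ?thesis .
  qed
  have e2: "idf' (f w) = idf w" using idff[OF wB] .
  have e3: "(\<forall>u'\<in>ball G' (f w) T. m (idf' u') = None \<longrightarrow> lam' u' = None) \<longleftrightarrow>
            (\<forall>u\<in>ball G w T. m (idf u) = None \<longrightarrow> lam u = None)" for m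
  proof -
    have "\<forall>u\<in>ball G w T. idf' (f u) = idf u \<and> lam' (f u) = lam u" using subT subR idff agree by blast
    then show ?thesis unfolding imgT by auto
  qed
  have e4: "(\<forall>u'\<in>ball G' (f w) (T + r). psi_star \<Gamma> \<psi> r G' (app G' idf' lam' (f w) m) u') \<longleftrightarrow>
            (\<forall>u\<in>ball G w (T + r). psi_star \<Gamma> \<psi> r G (app G idf lam w m) u)" for m
  proof -
    have "psi_star \<Gamma> \<psi> r G' (app G' idf' lam' (f w) m) (f u) = psi_star \<Gamma> \<psi> r G (app G idf lam w m) u"
      if u: "u \<in> ball G w (T + r)" for u
    proof -
      have ub: "u \<in> ball G v (\<rho> + (T + r))" using ball_in_ball[OF w rTr] u by blast
      have rr2: "\<rho> + (T + r) + r \<le> R" using rr by simp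
      show ?thesis
      proof (rule psi_transfer[OF ub rr2], rule ballI)
        fix a assume a: "a \<in> ball G u r"
        have eq: "\<rho> + (T + r) + r = \<rho> + T + 2 * r" by simp
        have ab: "a \<in> ball G v (\<rho> + T + 2 * r)"
          using ball_in_ball[OF ub rr2] a unfolding eq by blast
        then have aB: "a \<in> ball G v R" using subR by blast
        have "f a \<in> ball G' (f w) T \<longleftrightarrow> a \<in> ball G w T" by (rule ball_mem_iff[OF w rT aB])
        then show "app G' idf' lam' (f w) m (f a) = app G idf lam w m a"
          unfolding app_def using idff[OF aB] agree ab by simp
      qed
    qed
    then show ?thesis unfolding imgTr by auto
  qed
  show ?thesis unfolding Pset_def e1 e2 e3 e4 ..
qed

lemma lab_eq:
  assumes "u \<in> ball G v \<rho>" "\<rho> + p * kk + Suc (SS G) * kk \<le> R"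
  shows "lab G' idf' p (f u) = lab G idf p u"
  using assms
proof (induction p arbitrary: \<rho> u)
  case 0 then show ?case by simp
next
  case (Suc p)
  have rr: "\<rho> + kk + Suc (SS G) * kk \<le> R" using Suc.prems(2) by simp
  have pk: "pick G' idf' p (f u) = map_option f (pick G idf p u)" by (rule pick_eq[OF Suc.prems(1) rr])
  show ?case
  proof (cases "pick G idf p u")
    case None
    then have "lab G idf (Suc p) u = lab G idf p u" by simp
    moreover have "lab G' idf' (Suc p) (f u) = lab G' idf' p (f u)" using pk None by simp
    moreover have "lab G' idf' p (f u) = lab G idf p u" using Suc.IH[OF Suc.prems(1)] Suc.prems(2) by simp
    ultimately show ?thesis by simp
  next
    case (Some w)
    have w: "w \<in> verts G" "dist_le G T w u" using pick_Some[OF GG1 vid1 Some] by blast+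
    have rT: "\<rho> + T \<le> R" using rr kk_ge by simp
    have wb: "w \<in> ball G v (\<rho> + T)"
      using dist_fwd[OF Suc.prems(1) rT dist_le_sym[OF wf1 w(2)]] by blast
    have rr3: "\<rho> + T + T + 2 * r \<le> R" using rr kk_ge by simp
    have agree: "\<forall>a\<in>ball G v (\<rho> + T + T + 2 * r). lab G' idf' p (f a) = lab G idf p a"
    proof
      fix a assume "a \<in> ball G v (\<rho> + T + T + 2 * r)"
      then have "a \<in> ball G v (\<rho> + kk)" using ball_mono[of "\<rho> + T + T + 2 * r" "\<rho> + kk" G v] kk_ge by auto
      then show "lab G' idf' p (f a) = lab G idf p a"
        using Suc.IH[of a "\<rho> + kk"] Suc.prems(2) by (simp add: algebra_simps)
    qed
    have Peq: "Pset G' idf' (lab G' idf' p) (f w) = Pset G idf (lab G idf p) w"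
      by (rule Pset_eq[OF wb]) (use rr3 agree in simp_all)
    have uB: "u \<in> ball G v R" using in_B[of \<rho> u] Suc.prems(1) rT by simp
    have "lab G' idf' (Suc p) (f u) = (SOME m. m \<in> Pset G' idf' (lab G' idf' p) (f w)) (idf' (f u))"
      using pk Some by simp
    also have "\<dots> = (SOME m. m \<in> Pset G idf (lab G idf p) w) (idf u)" unfolding Peq idff[OF uB] ..
    also have "\<dots> = lab G idf (Suc p) u" using Some by simp
    finally show ?thesis .
  qed
qed

lemma Out_eq:
  assumes "KK * kk + Suc (SS G) * kk \<le> R"
  shows "Out G' idf' v' = Out G idf v"
proof -
  have "v \<in> ball G v 0" using v1 by simp
  then have "lab G' idf' KK (f v) = lab G idf KK v" using lab_eq[of v 0 KK] assms by simp
  then show ?thesis unfolding Out_def f_v by simp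
qed

end

lemma psi_cong_verts:
  assumes lv: "local_verifier \<G> \<Gamma> \<psi> r" and G: "G \<in> \<G>" and l1: "labeling_in G \<Gamma> l1"
    and agree: "\<forall>u\<in>verts G. l1 u = l2 u" and v: "v \<in> verts G"
  shows "\<psi> G l1 v = \<psi> G l2 v"
proof -
  have l2: "labeling_in G \<Gamma> l2" using l1 agree unfolding labeling_in_def by simp
  have "ball_iso G l1 v G l2 v r id"
    unfolding ball_iso_def using agree ball_sub[of G v r] by auto
  then show ?thesis using lv G l1 l2 v unfolding local_verifier_def by blast
qed

lemma fst_local_view: "fst (local_view G idf R v) = card (verts G)"
  by (simp add: local_view_def Let_def)

theorem corollary6p3:
  fixes \<G> :: "('v,'i) igraph set" and \<Sigma> :: "'i set" and \<Gamma> :: "'o set"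
    and \<psi> :: "('v,'i) igraph \<Rightarrow> ('v \<Rightarrow> 'o) \<Rightarrow> 'v \<Rightarrow> bool" and r :: nat
  assumes "LCL \<G> \<Sigma> \<Gamma> \<psi> r"
    and "\<exists>T::nat. mendable \<G> \<Gamma> \<psi> r (\<lambda>_. T)"
  shows "solvable_in_O_log_star \<G> \<Gamma> \<psi>"
proof -
  from assms(1) obtain \<Delta> where finGam: "finite \<Gamma>" and wfs: "\<forall>G\<in>\<G>. wf_graph G"
    and deg: "\<forall>G\<in>\<G>. max_degree_le G \<Delta>" and lv: "local_verifier \<G> \<Gamma> \<psi> r"
    unfolding LCL_def by blast
  from assms(2) obtain T where mend: "mendable \<G> \<Gamma> \<psi> r (\<lambda>_. T)" by blast
  show ?thesis unfolding solvable_in_O_log_star_def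
  proof
    fix c :: nat
    interpret S: setting \<G> \<Gamma> \<psi> r T \<Delta> c
      using finGam wfs deg lv mend by unfold_locales auto
    define P where "P = (\<lambda>(x :: ('v,'i) igraph \<times> ('v \<Rightarrow> nat) \<times> 'v) view.
      fst x \<in> \<G> \<and> valid_ids (fst x) c (fst (snd x)) \<and> snd (snd x) \<in> verts (fst x) \<and>
      local_view (fst x) (fst (snd x)) (S.tt (card (verts (fst x)))) (snd (snd x)) = view)"
    define A :: "'i view \<Rightarrow> 'o" where "A = (\<lambda>view. S.Out (fst (SOME x. P x view)) (fst (snd (SOME x. P x view)))
      (snd (snd (SOME x. P x view))))"
    define C where "C = (S.KK + 1) * S.kk"
    have tb: "\<forall>n. S.tt n \<le> C * (log_star n + 1)"
    proof
      fix n
      have "S.KK + log_star n + 1 \<le> (S.KK + 1) * (log_star n + 1)" by (simp add: algebra_simps)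
      then have "(S.KK + log_star n + 1) * S.kk \<le> ((S.KK + 1) * (log_star n + 1)) * S.kk"
        by (rule mult_right_mono) simp
      then show "S.tt n \<le> C * (log_star n + 1)" unfolding S.tt_def C_def by (simp add: algebra_simps)
    qed
    have sol: "LOCAL_solves \<G> \<Gamma> \<psi> A S.tt c"
      unfolding LOCAL_solves_def
    proof (intro ballI allI impI)
      fix G idf assume G: "G \<in> \<G>" and vid: "valid_ids G c idf"
      define R where "R = S.tt (card (verts G))"
      have eqA: "A (local_view G idf R v) = S.Out G idf v" if v: "v \<in> verts G" for v
      proof -
        define view where "view = local_view G idf R v"
        have ex: "\<exists>x. P x view" unfolding P_def view_def R_def
          using G vid v by (intro exI[of _ "(G, idf, v)"]) simp
        define x0 where "x0 = (SOME x. P x view)"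
        have Px0: "P x0 view" unfolding x0_def using ex by (rule someI_ex)
        obtain G0 idf0 v0 where x0: "x0 = (G0, idf0, v0)" by (cases x0) auto
        have G0: "G0 \<in> \<G>" and vid0: "valid_ids G0 c idf0" and v0: "v0 \<in> verts G0"
          and lv0: "local_view G0 idf0 (S.tt (card (verts G0))) v0 = view"
          using Px0 unfolding P_def x0 by auto
        have "card (verts G0) = card (verts G)"
          using arg_cong[OF lv0, of fst] unfolding view_def fst_local_view .
        then have lv0': "local_view G idf R v = local_view G0 idf0 R v0" using lv0 unfolding view_def R_def by simp
        interpret L: loc3 \<G> \<Gamma> \<psi> r T \<Delta> c G idf v G0 idf0 v0 R
          using G G0 vid vid0 v v0 lv0' wfs by unfold_locales (auto simp: valid_ids_def)
        have "S.KK * S.kk + Suc (S.SS G) * S.kk \<le> R"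
          unfolding R_def S.tt_def S.SS_def by (simp add: algebra_simps)
        then have "S.Out G0 idf0 v0 = S.Out G idf v" by (rule L.Out_eq)
        then show ?thesis unfolding A_def x0_def[symmetric] view_def[symmetric] x0 by simp
      qed
      have solO: "is_solution \<Gamma> \<psi> G (\<lambda>u. S.Out G idf u)" by (rule S.Out_solution[OF G vid])
      have agree: "\<forall>u\<in>verts G. S.Out G idf u = A (local_view G idf R u)" using eqA by simp
      have lin: "labeling_in G \<Gamma> (\<lambda>u. S.Out G idf u)" using solO unfolding is_solution_def by blast
      show "is_solution \<Gamma> \<psi> G (\<lambda>v. A (local_view G idf (S.tt (card (verts G))) v))"
        unfolding R_def[symmetric] is_solution_def
      proof (intro conjI ballI)
        show "labeling_in G \<Gamma> (\<lambda>v. A (local_view G idf R v))"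
          using lin agree unfolding labeling_in_def by simp
      next
        fix u assume u: "u \<in> verts G"
        have "\<psi> G (\<lambda>u. S.Out G idf u) u" using solO u unfolding is_solution_def by blast
        moreover have "\<psi> G (\<lambda>u. S.Out G idf u) u = \<psi> G (\<lambda>v. A (local_view G idf R v)) u"
          by (rule psi_cong_verts[OF lv G lin agree u])
        ultimately show "\<psi> G (\<lambda>v. A (local_view G idf R v)) u" by simp
      qed
    qed
    show "\<exists>(A :: 'i view \<Rightarrow> 'o) (t :: nat \<Rightarrow> nat) (C :: nat).
        (\<forall>n. t n \<le> C * (log_star n + 1)) \<and> LOCAL_solves \<G> \<Gamma> \<psi> A t c"
      using tb sol by blast
  qed
qed

end
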